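(* Let $\varepsilon$ be a splitting on a connected manifold $M$. Then $\mathcal R(\varepsilon)=0$ on $M\times M$ (i.e. $\varepsilon$ is flat) if and only if $\mathcal R_2(\varepsilon)=0$ on $M$.
   Context: A splitting $\varepsilon$ on a connected manifold $M$ ($\dim\ge2$) assigns smoothly to each $(p,q)$ a linear isomorphism $\varepsilon^{p,q}:T_pM\to T_qM$ with $\varepsilon^{q,r}\circ\varepsilon^{p,q}=\varepsilon^{p,r}$, $\varepsilon^{p,p}=\mathrm{id}$; in charts $(U,x^i)$, $(V,y^i)$ it has components $\varepsilon^i_j(x,y)$ with $\varepsilon^{p,q}(\partial/\partial x^j)=\varepsilon^i_j(x,y)\partial/\partial y^i$. $\mathcal R(\varepsilon)^i_{kj}(x,y)=A^i_{kj}-A^i_{jk}$ with $A^i_{kj}=\partial\varepsilon^i_j(x,y)/\partial x^k+(\partial\varepsilon^i_j(x,y)/\partial y^a)\varepsilon^a_k(x,y)$. $\Gamma^i_{jk}(x)=[\partial\varepsilon^i_k(x,y)/\partial y^j]_{y=x}$ and $\mathcal R_2(\varepsilon)^i_{rj,k}=B^i_{rj,k}-B^i_{jr,k}$ with $B^i_{rj,k}=\partial_r\Gamma^i_{kj}+\Gamma^a_{kr}\Gamma^i_{aj}$ (summation convention). *)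

theory Defs
  imports "HOL-Analysis.Analysis"
begin

fun Ck :: "nat \<Rightarrow> 'a::euclidean_space set \<Rightarrow> ('a \<Rightarrow> real) \<Rightarrow> bool" where
  "Ck 0 S f = continuous_on S f"
| "Ck (Suc k) S f = (f differentiable_on S \<and>
      (\<forall>b\<in>Basis. Ck k S (\<lambda>x. frechet_derivative f (at x) b)))"

definition smooth_fun :: "'a::euclidean_space set \<Rightarrow> ('a \<Rightarrow> real) \<Rightarrow> bool" where
  "smooth_fun S f \<longleftrightarrow> (\<forall>k. Ck k S f)"

type_synonym ('m, 'n) chart = "'m set \<times> ('m \<Rightarrow> real^'n)"

definition chart_img :: "('m, 'n) chart \<Rightarrow> (real^'n) set" where
  "chart_img c = snd c ` fst c"

definition chart_inv :: "('m, 'n) chart \<Rightarrow> real^'n \<Rightarrow> 'm" where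
  "chart_inv c = inv_into (fst c) (snd c)"

definition transition :: "('m, 'n) chart \<Rightarrow> ('m, 'n) chart \<Rightarrow> real^'n \<Rightarrow> real^'n" where
  "transition c c' z = snd c' (chart_inv c z)"

definition smooth_atlas :: "('m::topological_space, 'n::finite) chart set \<Rightarrow> bool" where
  "smooth_atlas A \<longleftrightarrow>
     (\<forall>c\<in>A. open (fst c) \<and> inj_on (snd c) (fst c) \<and> open (chart_img c) \<and>
            continuous_on (fst c) (snd c) \<and> continuous_on (chart_img c) (chart_inv c)) \<and>
     (\<Union>c\<in>A. fst c) = UNIV \<and>
     (\<forall>c\<in>A. \<forall>c'\<in>A. \<forall>i. smooth_fun (snd c ` (fst c \<inter> fst c')) (\<lambda>z. transition c c' z $ i))"

text \<open>Jacobian of the transition from chart c to chart c' at the point z (coordinates of c):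
  entry (i,a) is the partial derivative of the i-th coordinate of c' w.r.t. the a-th coordinate of c.\<close>

definition jac :: "('m, 'n::finite) chart \<Rightarrow> ('m, 'n) chart \<Rightarrow> real^'n \<Rightarrow> real^'n^'n" where
  "jac c c' z = (\<chi> i a. frechet_derivative (\<lambda>w. transition c c' w $ i) (at z) (axis a 1))"

text \<open>A splitting is given through its components in charts:
  eps c d p q $ i $ j = eps^i_j(x,y), i.e. eps^{p,q}(d/dx^j) = eps^i_j d/dy^i,
  where c = (U,x) contains p and d = (V,y) contains q.  The tangent-vector
  transformation law expresses that these are the components of one family
  of linear maps eps^{p,q} : T_pM -> T_qM.\<close>

definition eps_coord ::
  "(('m, 'n) chart \<Rightarrow> ('m, 'n) chart \<Rightarrow> 'm \<Rightarrow> 'm \<Rightarrow> real^'n^'n) \<Rightarrow>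
   ('m, 'n) chart \<Rightarrow> ('m, 'n) chart \<Rightarrow> 'n \<Rightarrow> 'n \<Rightarrow> ((real^'n) \<times> (real^'n)) \<Rightarrow> real" where
  "eps_coord eps c d i j = (\<lambda>(x, y). eps c d (chart_inv c x) (chart_inv d y) $ i $ j)"

definition is_splitting ::
  "('m::topological_space, 'n::finite) chart set \<Rightarrow>
   (('m, 'n) chart \<Rightarrow> ('m, 'n) chart \<Rightarrow> 'm \<Rightarrow> 'm \<Rightarrow> real^'n^'n) \<Rightarrow> bool" where
  "is_splitting A eps \<longleftrightarrow>
     (\<forall>c\<in>A. \<forall>d\<in>A. \<forall>p\<in>fst c. \<forall>q\<in>fst d. invertible (eps c d p q)) \<and>
     (\<forall>c\<in>A. \<forall>p\<in>fst c. eps c c p p = mat 1) \<and>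
     (\<forall>c\<in>A. \<forall>d\<in>A. \<forall>e\<in>A. \<forall>p\<in>fst c. \<forall>q\<in>fst d. \<forall>r\<in>fst e.
        eps d e q r ** eps c d p q = eps c e p r) \<and>
     (\<forall>c\<in>A. \<forall>c'\<in>A. \<forall>d\<in>A. \<forall>d'\<in>A. \<forall>p\<in>fst c \<inter> fst c'. \<forall>q\<in>fst d \<inter> fst d'.
        eps c' d' p q = jac d d' (snd d q) ** eps c d p q ** jac c' c (snd c' p)) \<and>
     (\<forall>c\<in>A. \<forall>d\<in>A. \<forall>i j. smooth_fun (chart_img c \<times> chart_img d) (eps_coord eps c d i j))"

definition dx :: "((real^'n) \<times> (real^'n) \<Rightarrow> real) \<Rightarrow> 'n::finite \<Rightarrow> (real^'n) \<times> (real^'n) \<Rightarrow> real" where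
  "dx f k z = frechet_derivative f (at z) (axis k 1, 0)"

definition dy :: "((real^'n) \<times> (real^'n) \<Rightarrow> real) \<Rightarrow> 'n::finite \<Rightarrow> (real^'n) \<times> (real^'n) \<Rightarrow> real" where
  "dy f a z = frechet_derivative f (at z) (0, axis a 1)"

definition A_coeff where
  "A_coeff eps c d i k j z =
     dx (eps_coord eps c d i j) k z +
     (\<Sum>a\<in>UNIV. dy (eps_coord eps c d i j) a z * eps_coord eps c d a k z)"

definition curvR where
  "curvR eps c d i k j z = A_coeff eps c d i k j z - A_coeff eps c d i j k z"

definition flat where
  "flat A eps \<longleftrightarrow> (\<forall>c\<in>A. \<forall>d\<in>A. \<forall>x\<in>chart_img c. \<forall>y\<in>chart_img d. \<forall>i k j.
       curvR eps c d i k j (x, y) = 0)"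

definition Gamma where
  "Gamma eps c i j k x = dy (eps_coord eps c c i k) j (x, x)"

definition B_coeff where
  "B_coeff eps c i r j k x =
     frechet_derivative (Gamma eps c i k j) (at x) (axis r 1) +
     (\<Sum>a\<in>UNIV. Gamma eps c a k r x * Gamma eps c i a j x)"

definition curvR2 where
  "curvR2 eps c i r j k x = B_coeff eps c i r j k x - B_coeff eps c i j r k x"

definition R2_zero where
  "R2_zero A eps \<longleftrightarrow> (\<forall>c\<in>A. \<forall>x\<in>chart_img c. \<forall>i r j k. curvR2 eps c i r j k x = 0)"

end

theory Submission
  imports Defs
begin


lemma schwarz_aux:
  fixes g :: "'a::euclidean_space \<Rightarrow> real"
  assumes S: "open S" and h: "h > 0"
    and inS: "\<And>s t. 0 \<le> s \<Longrightarrow> s \<le> h \<Longrightarrow> 0 \<le> t \<Longrightarrow> t \<le> h \<Longrightarrow> z + s *\<^sub>R u + t *\<^sub>R v \<in> S"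
    and dg: "\<And>w. w \<in> S \<Longrightarrow> (g has_derivative g' w) (at w)"
    and du: "\<And>w. w \<in> S \<Longrightarrow> ((\<lambda>w. g' w u) has_derivative hu w) (at w)"
  shows "\<exists>s t. 0 < s \<and> s < h \<and> 0 < t \<and> t < h \<and>
     g (z + h *\<^sub>R u + h *\<^sub>R v) - g (z + h *\<^sub>R u) - g (z + h *\<^sub>R v) + g z = h * h * hu (z + s *\<^sub>R u + t *\<^sub>R v) v"
proof -
  define \<phi> where "\<phi> s = g (z + s *\<^sub>R u + h *\<^sub>R v) - g (z + s *\<^sub>R u)" for s
  have lin: "linear (g' w)" if "w \<in> S" for w using dg[OF that] has_derivative_linear by blast
  have "\<exists>x\<in>{0<..<h}. \<phi> h - \<phi> 0 = (\<lambda>d. d * (g' (z + x *\<^sub>R u + h *\<^sub>R v) u - g' (z + x *\<^sub>R u) u)) (h - 0)"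
  proof (rule mvt_simple[OF h])
    fix x assume x: "0 \<le> x" "x \<le> h"
    have m1: "z + x *\<^sub>R u + h *\<^sub>R v \<in> S" using inS[OF x] h by simp
    have m2: "z + x *\<^sub>R u \<in> S" using inS[OF x, of 0] h by simp
    have i1: "((\<lambda>s. z + s *\<^sub>R u + h *\<^sub>R v) has_derivative (\<lambda>d. d *\<^sub>R u)) (at x within {0..h})"
      by (auto intro!: derivative_eq_intros)
    have i2: "((\<lambda>s. z + s *\<^sub>R u) has_derivative (\<lambda>d. d *\<^sub>R u)) (at x within {0..h})"
      by (auto intro!: derivative_eq_intros)
    have "((\<lambda>s. g (z + s *\<^sub>R u + h *\<^sub>R v) - g (z + s *\<^sub>R u)) has_derivative
       (\<lambda>d. g' (z + x *\<^sub>R u + h *\<^sub>R v) (d *\<^sub>R u) - g' (z + x *\<^sub>R u) (d *\<^sub>R u))) (at x within {0..h})"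
      by (intro has_derivative_diff has_derivative_compose[OF i1 dg[OF m1]] has_derivative_compose[OF i2 dg[OF m2]])
    moreover have "(\<lambda>d. g' (z + x *\<^sub>R u + h *\<^sub>R v) (d *\<^sub>R u) - g' (z + x *\<^sub>R u) (d *\<^sub>R u))
       = (\<lambda>d. d * (g' (z + x *\<^sub>R u + h *\<^sub>R v) u - g' (z + x *\<^sub>R u) u))"
      using linear_scale[OF lin[OF m1]] linear_scale[OF lin[OF m2]] by (auto simp: algebra_simps)
    ultimately show "(\<phi> has_derivative (\<lambda>d. d * (g' (z + x *\<^sub>R u + h *\<^sub>R v) u - g' (z + x *\<^sub>R u) u))) (at x within {0..h})"
      unfolding \<phi>_def by simp
  qed
  then obtain s where s: "0 < s" "s < h" and e1: "\<phi> h - \<phi> 0 = h * (g' (z + s *\<^sub>R u + h *\<^sub>R v) u - g' (z + s *\<^sub>R u) u)"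
    by auto
  define \<psi> where "\<psi> t = g' (z + s *\<^sub>R u + t *\<^sub>R v) u" for t
  have "\<exists>x\<in>{0<..<h}. \<psi> h - \<psi> 0 = (\<lambda>d. d * hu (z + s *\<^sub>R u + x *\<^sub>R v) v) (h - 0)"
  proof (rule mvt_simple[OF h])
    fix x assume x: "0 \<le> x" "x \<le> h"
    have m1: "z + s *\<^sub>R u + x *\<^sub>R v \<in> S" using inS[of s x] x s by simp
    have i1: "((\<lambda>t. z + s *\<^sub>R u + t *\<^sub>R v) has_derivative (\<lambda>d. d *\<^sub>R v)) (at x within {0..h})"
      by (auto intro!: derivative_eq_intros)
    have lh: "linear (hu (z + s *\<^sub>R u + x *\<^sub>R v))" using du[OF m1] has_derivative_linear by blast
    have "(\<psi> has_derivative (\<lambda>d. hu (z + s *\<^sub>R u + x *\<^sub>R v) (d *\<^sub>R v))) (at x within {0..h})"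
      unfolding \<psi>_def by (rule has_derivative_compose[OF i1 du[OF m1]])
    then show "(\<psi> has_derivative (\<lambda>d. d * hu (z + s *\<^sub>R u + x *\<^sub>R v) v)) (at x within {0..h})"
      using linear_scale[OF lh] by simp
  qed
  then obtain t where t: "0 < t" "t < h" and e2: "\<psi> h - \<psi> 0 = h * hu (z + s *\<^sub>R u + t *\<^sub>R v) v"
    by auto
  have "g (z + h *\<^sub>R u + h *\<^sub>R v) - g (z + h *\<^sub>R u) - g (z + h *\<^sub>R v) + g z = \<phi> h - \<phi> 0"
    unfolding \<phi>_def by (simp add: algebra_simps)
  also have "\<dots> = h * (\<psi> h - \<psi> 0)" using e1 unfolding \<psi>_def by simp
  also have "\<dots> = h * h * hu (z + s *\<^sub>R u + t *\<^sub>R v) v" using e2 by simp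
  finally show ?thesis using s t by blast
qed

lemma schwarz:
  fixes g :: "'a::euclidean_space \<Rightarrow> real"
  assumes S: "open S" "z \<in> S"
    and dg: "\<And>w. w \<in> S \<Longrightarrow> (g has_derivative g' w) (at w)"
    and du: "\<And>w. w \<in> S \<Longrightarrow> ((\<lambda>w. g' w u) has_derivative hu w) (at w)"
    and dv: "\<And>w. w \<in> S \<Longrightarrow> ((\<lambda>w. g' w v) has_derivative hv w) (at w)"
    and cu: "continuous (at z) (\<lambda>w. hu w v)"
    and cv: "continuous (at z) (\<lambda>w. hv w u)"
  shows "hu z v = hv z u"
proof (rule ccontr)
  assume ne: "hu z v \<noteq> hv z u"
  define e where "e = \<bar>hu z v - hv z u\<bar> / 2"
  have e: "e > 0" using ne by (simp add: e_def)
  obtain d1 where d1: "d1 > 0" "\<And>w. dist w z < d1 \<Longrightarrow> dist (hu w v) (hu z v) < e"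
    using cu e unfolding continuous_at_eps_delta by metis
  obtain d2 where d2: "d2 > 0" "\<And>w. dist w z < d2 \<Longrightarrow> dist (hv w u) (hv z u) < e"
    using cv e unfolding continuous_at_eps_delta by metis
  obtain d3 where d3: "d3 > 0" "ball z d3 \<subseteq> S" using S open_contains_ball by blast
  define d where "d = min d1 (min d2 d3)"
  have d: "d > 0" using d1 d2 d3 by (simp add: d_def)
  define h where "h = d / (2 * (norm u + norm v + 1))"
  have pos: "norm u + norm v + 1 > 0" using norm_ge_zero[of u] norm_ge_zero[of v] by linarith
  hence h: "h > 0" unfolding h_def using d by simp
  have small: "dist (z + s *\<^sub>R u + t *\<^sub>R v) z < d" if "0 \<le> s" "s \<le> h" "0 \<le> t" "t \<le> h" for s t
  proof -
    have "dist (z + s *\<^sub>R u + t *\<^sub>R v) z = norm (s *\<^sub>R u + t *\<^sub>R v)" by (simp add: dist_norm)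
    also have "\<dots> \<le> s * norm u + t * norm v" using norm_triangle_ineq[of "s *\<^sub>R u" "t *\<^sub>R v"] that by simp
    also have "\<dots> \<le> h * norm u + h * norm v" using that by (intro add_mono mult_right_mono) auto
    also have "\<dots> = h * (norm u + norm v)" by (simp add: algebra_simps)
    also have "\<dots> < d"
    proof -
      have "h * (norm u + norm v) \<le> h * (norm u + norm v + 1)" using h by simp
      also have "\<dots> = d / 2" unfolding h_def using pos by (simp add: field_simps)
      finally show ?thesis using d by linarith
    qed
    finally show ?thesis .
  qed
  have inS: "z + s *\<^sub>R u + t *\<^sub>R v \<in> S" if "0 \<le> s" "s \<le> h" "0 \<le> t" "t \<le> h" for s t
    using small[OF that] d3(2) by (auto simp: d_def dist_commute)
  have inS': "z + s *\<^sub>R v + t *\<^sub>R u \<in> S" if "0 \<le> s" "s \<le> h" "0 \<le> t" "t \<le> h" for s t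
    using inS[of t s] that by (simp add: algebra_simps)
  obtain s t where st: "0 < s" "s < h" "0 < t" "t < h" and
    E1: "g (z + h *\<^sub>R u + h *\<^sub>R v) - g (z + h *\<^sub>R u) - g (z + h *\<^sub>R v) + g z = h * h * hu (z + s *\<^sub>R u + t *\<^sub>R v) v"
    using schwarz_aux[OF S(1) h inS dg du] by blast
  obtain s' t' where st': "0 < s'" "s' < h" "0 < t'" "t' < h" and
    E2: "g (z + h *\<^sub>R v + h *\<^sub>R u) - g (z + h *\<^sub>R v) - g (z + h *\<^sub>R u) + g z = h * h * hv (z + s' *\<^sub>R v + t' *\<^sub>R u) u"
    using schwarz_aux[OF S(1) h inS' dg dv] by blast
  have "h * h * hu (z + s *\<^sub>R u + t *\<^sub>R v) v = h * h * hv (z + s' *\<^sub>R v + t' *\<^sub>R u) u"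
    using E1 E2 by (simp add: algebra_simps)
  hence eq: "hu (z + s *\<^sub>R u + t *\<^sub>R v) v = hv (z + s' *\<^sub>R v + t' *\<^sub>R u) u" using h by simp
  have a1: "dist (hu (z + s *\<^sub>R u + t *\<^sub>R v) v) (hu z v) < e"
    using small[of s t] st by (intro d1(2)) (auto simp: d_def)
  have a2: "dist (hv (z + s' *\<^sub>R v + t' *\<^sub>R u) u) (hv z u) < e"
    using small[of t' s'] st' by (intro d2(2)) (auto simp: d_def algebra_simps)
  have "\<bar>hu z v - hv z u\<bar> < 2 * e" using a1 a2 eq by (simp add: dist_real_def)
  thus False by (simp add: e_def)
qed




definition pd :: "('a::real_normed_vector \<Rightarrow> real) \<Rightarrow> 'a \<Rightarrow> 'a \<Rightarrow> real" where
  "pd f v z = frechet_derivative f (at z) v"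

abbreviation ax :: "'n::finite \<Rightarrow> real^'n" where "ax k \<equiv> axis k 1"

lemma fd_cong:
  assumes "open S" "z \<in> S" "\<And>w. w \<in> S \<Longrightarrow> f w = g w"
  shows "frechet_derivative f (at z) = frechet_derivative g (at z)"
proof -
  have "\<And>D. (f has_derivative D) (at z) \<longleftrightarrow> (g has_derivative D) (at z)"
  proof
    fix D assume "(f has_derivative D) (at z)"
    thus "(g has_derivative D) (at z)" by (rule has_derivative_transform_within_open[OF _ assms(1,2)]) (use assms(3) in auto)
  next
    fix D assume "(g has_derivative D) (at z)"
    thus "(f has_derivative D) (at z)" by (rule has_derivative_transform_within_open[OF _ assms(1,2)]) (use assms(3) in auto)
  qed
  thus ?thesis unfolding frechet_derivative_def by simp
qed

lemma pd_cong:
  assumes "open S" "z \<in> S" "\<And>w. w \<in> S \<Longrightarrow> f w = g w"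
  shows "pd f v z = pd g v z"
  using fd_cong[OF assms] by (simp add: pd_def)

lemma pd_eq: "(f has_derivative D) (at z) \<Longrightarrow> pd f v z = D v"
  unfolding pd_def using frechet_derivative_at by metis

lemma diff_on_open: "open S \<Longrightarrow> f differentiable_on S \<longleftrightarrow> (\<forall>z\<in>S. f differentiable (at z))"
  unfolding differentiable_on_def using at_within_open by metis

lemma Ck_cong:
  assumes "open S" "\<And>w. w \<in> S \<Longrightarrow> f w = g w" "Ck k S f"
  shows "Ck k S g"
  using assms
proof (induction k arbitrary: f g)
  case 0
  then show ?case using continuous_on_cong[of S S f g] by simp
next
  case (Suc k)
  have d: "g differentiable_on S"
    unfolding diff_on_open[OF Suc.prems(1)]
  proof
    fix z assume z: "z \<in> S"
    then obtain D where "(f has_derivative D) (at z)"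
      using Suc.prems(3) unfolding Ck.simps diff_on_open[OF Suc.prems(1)] differentiable_def by blast
    hence "(g has_derivative D) (at z)"
      by (rule has_derivative_transform_within_open[OF _ Suc.prems(1) z]) (use Suc.prems(2) in auto)
    thus "g differentiable at z" unfolding differentiable_def by blast
  qed
  have "Ck k S (\<lambda>x. frechet_derivative g (at x) b)" if "b \<in> Basis" for b
  proof (rule Suc.IH[OF Suc.prems(1) _ ])
    show "Ck k S (\<lambda>x. frechet_derivative f (at x) b)" using Suc.prems(3) that by simp
    show "frechet_derivative f (at w) b = frechet_derivative g (at w) b" if "w \<in> S" for w
      using fd_cong[OF Suc.prems(1) that Suc.prems(2)] by simp
  qed
  then show ?case using d by simp
qed

lemma smooth_cong: "open S \<Longrightarrow> (\<And>w. w \<in> S \<Longrightarrow> f w = g w) \<Longrightarrow> smooth_fun S f \<Longrightarrow> smooth_fun S g"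
  unfolding smooth_fun_def using Ck_cong by blast

lemma smooth_cont: "smooth_fun S f \<Longrightarrow> continuous_on S f"
  unfolding smooth_fun_def by (metis Ck.simps(1))

lemma smooth_differentiable: "smooth_fun S f \<Longrightarrow> open S \<Longrightarrow> z \<in> S \<Longrightarrow> f differentiable (at z)"
  unfolding smooth_fun_def by (metis Ck.simps(2) diff_on_open)

lemma smooth_hasd: "smooth_fun S f \<Longrightarrow> open S \<Longrightarrow> z \<in> S \<Longrightarrow> (f has_derivative frechet_derivative f (at z)) (at z)"
  using smooth_differentiable frechet_derivative_works by blast

lemma smooth_pd_fd: "smooth_fun S f \<Longrightarrow> b \<in> Basis \<Longrightarrow> smooth_fun S (\<lambda>x. frechet_derivative f (at x) b)"
  unfolding smooth_fun_def by (metis Ck.simps(2))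

lemma smooth_pd: "smooth_fun S f \<Longrightarrow> b \<in> Basis \<Longrightarrow> smooth_fun S (pd f b)"
  using smooth_pd_fd[of S f b] by (simp add: pd_def[abs_def])

lemma linear_repr:
  fixes L :: "real^'n \<Rightarrow> real"
  assumes "linear L"
  shows "L h = (\<Sum>k\<in>UNIV. h $ k * L (ax k))"
proof -
  have "L h = L (\<Sum>k\<in>UNIV. h $ k *\<^sub>R ax k)"
    using basis_expansion[of h] by (simp add: scalar_mult_eq_scaleR)
  also have "\<dots> = (\<Sum>k\<in>UNIV. h $ k * L (ax k))"
    using assms by (simp add: linear_sum linear_scale)
  finally show ?thesis .
qed

lemma smooth_hasd_vec:
  fixes f :: "real^'n \<Rightarrow> real"
  assumes "smooth_fun S f" "open S" "z \<in> S"
  shows "(f has_derivative (\<lambda>h. \<Sum>k\<in>UNIV. h $ k * pd f (ax k) z)) (at z)"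
proof -
  have d: "(f has_derivative frechet_derivative f (at z)) (at z)" using smooth_hasd assms by blast
  have "linear (frechet_derivative f (at z))" using d has_derivative_linear by blast
  hence "frechet_derivative f (at z) = (\<lambda>h. \<Sum>k\<in>UNIV. h $ k * pd f (ax k) z)"
    using linear_repr by (auto simp: pd_def)
  thus ?thesis using d by simp
qed

lemma ax_Basis[simp]: "ax k \<in> Basis"
  by simp

lemma smooth_pd_ax: "smooth_fun S f \<Longrightarrow> smooth_fun S (pd f (ax k))"
  using smooth_pd ax_Basis by blast

lemma Ck_slice2:
  fixes f :: "('a::euclidean_space \<times> 'b::euclidean_space) \<Rightarrow> real"
  assumes "open P" "open V" "\<And>y. y \<in> V \<Longrightarrow> (x0, y) \<in> P" "Ck k P f"
  shows "Ck k V (\<lambda>y. f (x0, y))"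
  using assms(4)
proof (induction k arbitrary: f)
  case 0
  have "continuous_on V (\<lambda>y. (x0, y))" by (intro continuous_intros)
  moreover have "(\<lambda>y. (x0, y)) ` V \<subseteq> P" using assms(3) by auto
  ultimately show ?case using 0 continuous_on_subset by (auto intro: continuous_on_compose2[of P f])
next
  case (Suc k)
  have fd: "f differentiable (at (x0, y))" if "y \<in> V" for y
    using Suc.prems assms(3)[OF that] diff_on_open[OF assms(1)] by auto
  have hd: "((\<lambda>y. f (x0, y)) has_derivative (\<lambda>h. frechet_derivative f (at (x0, y)) (0, h))) (at y)" if "y \<in> V" for y
  proof -
    have "((\<lambda>y. (x0, y)) has_derivative (\<lambda>h. (0, h))) (at y)"
      by (auto intro!: derivative_eq_intros)
    from diff_chain_at[OF this frechet_derivative_works[THEN iffD1, OF fd[OF that]]]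
    show ?thesis by (simp add: o_def)
  qed
  have "(\<lambda>y. f (x0, y)) differentiable_on V"
    using hd diff_on_open[OF assms(2)] differentiable_def by blast
  moreover have "Ck k V (\<lambda>y. frechet_derivative (\<lambda>y. f (x0, y)) (at y) b)" if "b \<in> Basis" for b
  proof (rule Ck_cong[OF assms(2)])
    have "(0, b) \<in> (Basis :: ('a \<times> 'b) set)" using that by (simp add: Basis_prod_def)
    hence "Ck k P (\<lambda>z. frechet_derivative f (at z) (0, b))" using Suc.prems by simp
    thus "Ck k V (\<lambda>y. frechet_derivative f (at (x0, y)) (0, b))" using Suc.IH by blast
    show "frechet_derivative f (at (x0, w)) (0, b) = frechet_derivative (\<lambda>y. f (x0, y)) (at w) b" if "w \<in> V" for w
      using frechet_derivative_at[OF hd[OF that]] by metis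
  qed
  ultimately show ?case by simp
qed

lemma Ck_slice1:
  fixes f :: "('a::euclidean_space \<times> 'b::euclidean_space) \<Rightarrow> real"
  assumes "open P" "open V" "\<And>x. x \<in> V \<Longrightarrow> (x, y0) \<in> P" "Ck k P f"
  shows "Ck k V (\<lambda>x. f (x, y0))"
  using assms(4)
proof (induction k arbitrary: f)
  case 0
  have "continuous_on V (\<lambda>x. (x, y0))" by (intro continuous_intros)
  moreover have "(\<lambda>x. (x, y0)) ` V \<subseteq> P" using assms(3) by auto
  ultimately show ?case using 0 continuous_on_subset by (auto intro: continuous_on_compose2[of P f])
next
  case (Suc k)
  have fd: "f differentiable (at (x, y0))" if "x \<in> V" for x
    using Suc.prems assms(3)[OF that] diff_on_open[OF assms(1)] by auto
  have hd: "((\<lambda>x. f (x, y0)) has_derivative (\<lambda>h. frechet_derivative f (at (x, y0)) (h, 0))) (at x)" if "x \<in> V" for x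
  proof -
    have "((\<lambda>x. (x, y0)) has_derivative (\<lambda>h. (h, 0))) (at x)"
      by (auto intro!: derivative_eq_intros)
    from diff_chain_at[OF this frechet_derivative_works[THEN iffD1, OF fd[OF that]]]
    show ?thesis by (simp add: o_def)
  qed
  have "(\<lambda>x. f (x, y0)) differentiable_on V"
    using hd diff_on_open[OF assms(2)] differentiable_def by blast
  moreover have "Ck k V (\<lambda>x. frechet_derivative (\<lambda>x. f (x, y0)) (at x) b)" if "b \<in> Basis" for b
  proof (rule Ck_cong[OF assms(2)])
    have "(b, 0) \<in> (Basis :: ('a \<times> 'b) set)" using that by (simp add: Basis_prod_def)
    hence "Ck k P (\<lambda>z. frechet_derivative f (at z) (b, 0))" using Suc.prems by simp
    thus "Ck k V (\<lambda>x. frechet_derivative f (at (x, y0)) (b, 0))" using Suc.IH by blast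
    show "frechet_derivative f (at (w, y0)) (b, 0) = frechet_derivative (\<lambda>x. f (x, y0)) (at w) b" if "w \<in> V" for w
      using frechet_derivative_at[OF hd[OF that]] by metis
  qed
  ultimately show ?case by simp
qed

lemma smooth_slice2:
  "open P \<Longrightarrow> open V \<Longrightarrow> (\<And>y. y \<in> V \<Longrightarrow> (x0, y) \<in> P) \<Longrightarrow> smooth_fun P f \<Longrightarrow> smooth_fun V (\<lambda>y. f (x0, y))"
  unfolding smooth_fun_def using Ck_slice2 by blast

lemma smooth_slice1:
  "open P \<Longrightarrow> open V \<Longrightarrow> (\<And>x. x \<in> V \<Longrightarrow> (x, y0) \<in> P) \<Longrightarrow> smooth_fun P f \<Longrightarrow> smooth_fun V (\<lambda>x. f (x, y0))"
  unfolding smooth_fun_def using Ck_slice1 by blast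

lemma smooth_schwarz:
  fixes g :: "real^'n \<Rightarrow> real"
  assumes "smooth_fun S g" "open S" "z \<in> S"
  shows "pd (pd g (ax a)) (ax b) z = pd (pd g (ax b)) (ax a) z"
proof -
  let ?g' = "\<lambda>w. frechet_derivative g (at w)"
  have sa: "smooth_fun S (pd g (ax a))" and sb: "smooth_fun S (pd g (ax b))"
    using assms smooth_pd_ax by blast+
  have "pd (pd g (ax a)) (ax b) z = frechet_derivative (\<lambda>w. ?g' w (ax a)) (at z) (ax b)"
    by (simp add: pd_def[abs_def])
  also have "\<dots> = frechet_derivative (\<lambda>w. ?g' w (ax b)) (at z) (ax a)"
  proof (rule schwarz[OF assms(2,3)])
    show "(g has_derivative ?g' w) (at w)" if "w \<in> S" for w using smooth_hasd assms that by blast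
    show "((\<lambda>w. ?g' w (ax a)) has_derivative frechet_derivative (\<lambda>w. ?g' w (ax a)) (at w)) (at w)" if "w \<in> S" for w
      using smooth_hasd[OF sa assms(2) that] by (simp add: pd_def[abs_def])
    show "((\<lambda>w. ?g' w (ax b)) has_derivative frechet_derivative (\<lambda>w. ?g' w (ax b)) (at w)) (at w)" if "w \<in> S" for w
      using smooth_hasd[OF sb assms(2) that] by (simp add: pd_def[abs_def])
    have "continuous_on S (pd (pd g (ax a)) (ax b))" using smooth_cont smooth_pd_ax[OF sa] by blast
    thus "continuous (at z) (\<lambda>w. frechet_derivative (\<lambda>w. ?g' w (ax a)) (at w) (ax b))"
      using assms continuous_on_eq_continuous_at by (fastforce simp: pd_def[abs_def])
    have "continuous_on S (pd (pd g (ax b)) (ax a))" using smooth_cont smooth_pd_ax[OF sb] by blast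
    thus "continuous (at z) (\<lambda>w. frechet_derivative (\<lambda>w. ?g' w (ax b)) (at w) (ax a))"
      using assms continuous_on_eq_continuous_at by (fastforce simp: pd_def[abs_def])
  qed
  also have "\<dots> = pd (pd g (ax b)) (ax a) z"
    by (simp add: pd_def[abs_def])
  finally show ?thesis .
qed




lemma sum_axis[simp]: "(\<Sum>k'\<in>UNIV. (axis k (1::real)) $ k' * f k') = f k"
proof -
  have "(\<Sum>k'\<in>UNIV. (axis k (1::real)) $ k' * f k') = (\<Sum>k'\<in>UNIV. if k' = k then f k' else 0)"
    by (rule sum.cong) (auto simp: axis_def)
  thus ?thesis by simp
qed

lemma sum_axis0[simp]: "(\<Sum>k'\<in>UNIV. (0::real^'n) $ k' * f k') = 0"
  by simp

lemma hasd_snd: "(f has_derivative D) (at (snd z)) \<Longrightarrow> ((\<lambda>z. f (snd z)) has_derivative (\<lambda>h. D (snd h))) (at z)"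
  using has_derivative_compose[OF has_derivative_snd[OF has_derivative_ident]] by blast

lemma hasd_fst: "(f has_derivative D) (at (fst z)) \<Longrightarrow> ((\<lambda>z. f (fst z)) has_derivative (\<lambda>h. D (fst h))) (at z)"
  using has_derivative_compose[OF has_derivative_fst[OF has_derivative_ident]] by blast

locale spl =
  fixes A :: "('m::topological_space, 'n::finite) chart set"
    and eps :: "('m, 'n) chart \<Rightarrow> ('m, 'n) chart \<Rightarrow> 'm \<Rightarrow> 'm \<Rightarrow> real^'n^'n"
  assumes atlas: "smooth_atlas A" and split: "is_splitting A eps"
begin

lemma open_dom: "c \<in> A \<Longrightarrow> open (fst c)"
  using atlas by (auto simp: smooth_atlas_def)
lemma open_img: "c \<in> A \<Longrightarrow> open (chart_img c)"
  using atlas by (auto simp: smooth_atlas_def)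
lemma inj_chart: "c \<in> A \<Longrightarrow> inj_on (snd c) (fst c)"
  using atlas by (auto simp: smooth_atlas_def)
lemma cont_chart: "c \<in> A \<Longrightarrow> continuous_on (fst c) (snd c)"
  using atlas by (auto simp: smooth_atlas_def)
lemma cont_inv: "c \<in> A \<Longrightarrow> continuous_on (chart_img c) (chart_inv c)"
  using atlas by (auto simp: smooth_atlas_def)
lemma cover: "\<exists>c\<in>A. p \<in> fst c"
  using atlas by (auto simp: smooth_atlas_def)
lemma trans_smooth: "c \<in> A \<Longrightarrow> d \<in> A \<Longrightarrow> smooth_fun (snd c ` (fst c \<inter> fst d)) (\<lambda>z. transition c d z $ i)"
  using atlas by (auto simp: smooth_atlas_def)

lemma inv1: "c \<in> A \<Longrightarrow> p \<in> fst c \<Longrightarrow> chart_inv c (snd c p) = p"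
  using inj_chart by (simp add: chart_inv_def)
lemma inv2: "x \<in> chart_img c \<Longrightarrow> snd c (chart_inv c x) = x"
  by (simp add: chart_inv_def chart_img_def f_inv_into_f)
lemma inv3: "x \<in> chart_img c \<Longrightarrow> chart_inv c x \<in> fst c"
  by (simp add: chart_inv_def chart_img_def inv_into_into)
lemma img_mem: "p \<in> fst c \<Longrightarrow> snd c p \<in> chart_img c"
  by (simp add: chart_img_def)

lemma open_image: "c \<in> A \<Longrightarrow> open V \<Longrightarrow> V \<subseteq> fst c \<Longrightarrow> open (snd c ` V)"
proof -
  assume c: "c \<in> A" and V: "open V" "V \<subseteq> fst c"
  have "snd c ` V = chart_img c \<inter> chart_inv c -` V"
  proof
    show "snd c ` V \<subseteq> chart_img c \<inter> chart_inv c -` V"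
      using V inv1[OF c] by (auto simp: chart_img_def)
    show "chart_img c \<inter> chart_inv c -` V \<subseteq> snd c ` V"
    proof
      fix x assume "x \<in> chart_img c \<inter> chart_inv c -` V"
      hence "x = snd c (chart_inv c x)" "chart_inv c x \<in> V" using inv2[of x c] by auto
      thus "x \<in> snd c ` V" by (metis image_eqI)
    qed
  qed
  moreover have "open (chart_inv c -` V \<inter> chart_img c)"
    using continuous_on_open_vimage[OF open_img[OF c]] cont_inv[OF c] V by blast
  ultimately show ?thesis by (simp add: Int_commute)
qed

lemma open_preimage: "c \<in> A \<Longrightarrow> open B \<Longrightarrow> open (fst c \<inter> snd c -` B)"
proof -
  assume c: "c \<in> A" and B: "open B"
  have "open (snd c -` B \<inter> fst c)"
    using continuous_on_open_vimage[OF open_dom[OF c]] cont_chart[OF c] B by blast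
  thus ?thesis by (simp add: Int_commute)
qed

lemma eps_smooth: "c \<in> A \<Longrightarrow> d \<in> A \<Longrightarrow> smooth_fun (chart_img c \<times> chart_img d) (eps_coord eps c d i j)"
  using split by (auto simp: is_splitting_def)

lemma comp: "c \<in> A \<Longrightarrow> d \<in> A \<Longrightarrow> e \<in> A \<Longrightarrow> p \<in> fst c \<Longrightarrow> q \<in> fst d \<Longrightarrow> r \<in> fst e \<Longrightarrow>
   eps d e q r ** eps c d p q = eps c e p r"
  using split unfolding is_splitting_def by blast

lemma ident: "c \<in> A \<Longrightarrow> p \<in> fst c \<Longrightarrow> eps c c p p = mat 1"
  using split unfolding is_splitting_def by blast

lemma consist: "c \<in> A \<Longrightarrow> c' \<in> A \<Longrightarrow> d \<in> A \<Longrightarrow> d' \<in> A \<Longrightarrow> p \<in> fst c \<inter> fst c' \<Longrightarrow> q \<in> fst d \<inter> fst d' \<Longrightarrow>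
   eps c' d' p q = jac d d' (snd d q) ** eps c d p q ** jac c' c (snd c' p)"
  using split unfolding is_splitting_def by blast

lemma open_prod_img: "c \<in> A \<Longrightarrow> d \<in> A \<Longrightarrow> open (chart_img c \<times> chart_img d)"
  using open_img open_Times by blast

end

locale splb = spl +
  fixes c0 p0
  assumes c0: "c0 \<in> A" and p0: "p0 \<in> fst c0"
begin

definition "x0 = snd c0 p0"

lemma x0_img: "x0 \<in> chart_img c0"
  using p0 img_mem x0_def by simp

definition Fd where "Fd d i j y = eps_coord eps c0 d i j (x0, y)"
definition Gd where "Gd d i j x = eps_coord eps d c0 i j (x, x0)"

lemma Fd_val: "Fd d i j y = eps c0 d p0 (chart_inv d y) $ i $ j"
  using inv1[OF c0 p0] by (simp add: Fd_def eps_coord_def x0_def)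
lemma Gd_val: "Gd d i j x = eps d c0 (chart_inv d x) p0 $ i $ j"
  using inv1[OF c0 p0] by (simp add: Gd_def eps_coord_def x0_def)

lemma M1: assumes "c \<in> A" "d \<in> A" "x \<in> chart_img c" "y \<in> chart_img d"
  shows "eps_coord eps c d i j (x, y) = (\<Sum>m\<in>UNIV. Fd d i m y * Gd c m j x)"
proof -
  have "eps c0 d p0 (chart_inv d y) ** eps c c0 (chart_inv c x) p0 = eps c d (chart_inv c x) (chart_inv d y)"
    using comp[OF assms(1) c0 assms(2) inv3[OF assms(3)] p0 inv3[OF assms(4)]] .
  hence "eps c d (chart_inv c x) (chart_inv d y) $ i $ j = (eps c0 d p0 (chart_inv d y) ** eps c c0 (chart_inv c x) p0) $ i $ j"
    by simp
  also have "\<dots> = (\<Sum>m\<in>UNIV. Fd d i m y * Gd c m j x)"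
    by (simp add: Fd_val Gd_val matrix_matrix_mult_def)
  finally show ?thesis by (simp add: eps_coord_def)
qed

lemma M2: assumes "d \<in> A" "y \<in> chart_img d"
  shows "(\<Sum>m\<in>UNIV. Fd d i m y * Gd d m j y) = (if i = j then 1 else 0)"
  using M1[OF assms(1,1,2,2), of i j] ident[OF assms(1) inv3[OF assms(2)]]
  by (simp add: eps_coord_def mat_def)

lemma M3: assumes "d \<in> A" "y \<in> chart_img d"
  shows "(\<Sum>m\<in>UNIV. Gd d i m y * Fd d m j y) = (if i = j then 1 else 0)"
proof -
  have "eps d c0 (chart_inv d y) p0 ** eps c0 d p0 (chart_inv d y) = eps c0 c0 p0 p0"
    using comp[OF c0 assms(1) c0 p0 inv3[OF assms(2)] p0] .
  hence "(eps d c0 (chart_inv d y) p0 ** eps c0 d p0 (chart_inv d y)) $ i $ j = mat 1 $ i $ j"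
    using ident[OF c0 p0] by simp
  thus ?thesis by (simp add: Fd_val Gd_val matrix_matrix_mult_def mat_def)
qed

lemma Fd_smooth: "d \<in> A \<Longrightarrow> smooth_fun (chart_img d) (Fd d i j)"
  unfolding Fd_def[abs_def]
  by (rule smooth_slice2[OF open_prod_img[OF c0] open_img _ eps_smooth[OF c0]]) (auto simp: x0_img)

lemma Gd_smooth: "d \<in> A \<Longrightarrow> smooth_fun (chart_img d) (Gd d i j)"
  unfolding Gd_def[abs_def]
  by (rule smooth_slice1[OF open_prod_img[OF _ c0] open_img _ eps_smooth[OF _ c0]]) (auto simp: x0_img)

lemma eps_hasd: assumes "c \<in> A" "d \<in> A" "x \<in> chart_img c" "y \<in> chart_img d"
  shows "(eps_coord eps c d i j has_derivative (\<lambda>h. \<Sum>m\<in>UNIV.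
      (\<Sum>k\<in>UNIV. snd h $ k * pd (Fd d i m) (ax k) y) * Gd c m j x +
      Fd d i m y * (\<Sum>k\<in>UNIV. fst h $ k * pd (Gd c m j) (ax k) x))) (at (x, y))"
proof -
  let ?H = "\<lambda>z. \<Sum>m\<in>UNIV. Fd d i m (snd z) * Gd c m j (fst z)"
  have "(?H has_derivative (\<lambda>h. \<Sum>m\<in>UNIV.
      (\<Sum>k\<in>UNIV. snd h $ k * pd (Fd d i m) (ax k) y) * Gd c m j x +
      Fd d i m y * (\<Sum>k\<in>UNIV. fst h $ k * pd (Gd c m j) (ax k) x))) (at (x, y))"
  proof (rule has_derivative_sum)
    fix m
    have f: "((\<lambda>z. Fd d i m (snd z)) has_derivative (\<lambda>h. \<Sum>k\<in>UNIV. snd h $ k * pd (Fd d i m) (ax k) y)) (at (x, y))"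
      using hasd_snd[of "Fd d i m" _ "(x,y)"] smooth_hasd_vec[OF Fd_smooth[OF assms(2)] open_img[OF assms(2)] assms(4), of i m] by simp
    have g: "((\<lambda>z. Gd c m j (fst z)) has_derivative (\<lambda>h. \<Sum>k\<in>UNIV. fst h $ k * pd (Gd c m j) (ax k) x)) (at (x, y))"
      using hasd_fst[of "Gd c m j" _ "(x,y)"] smooth_hasd_vec[OF Gd_smooth[OF assms(1)] open_img[OF assms(1)] assms(3), of m j] by simp
    show "((\<lambda>z. Fd d i m (snd z) * Gd c m j (fst z)) has_derivative (\<lambda>h. (\<Sum>k\<in>UNIV. snd h $ k * pd (Fd d i m) (ax k) y) * Gd c m j x +
      Fd d i m y * (\<Sum>k\<in>UNIV. fst h $ k * pd (Gd c m j) (ax k) x))) (at (x, y))"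
      using has_derivative_mult[OF f g] by (simp add: algebra_simps)
  qed
  thus ?thesis
    by (rule has_derivative_transform_within_open[OF _ open_prod_img[OF assms(1,2)]])
       (use assms in \<open>auto simp: M1[OF assms(1,2)]\<close>)
qed

lemma dx_eps: assumes "c \<in> A" "d \<in> A" "x \<in> chart_img c" "y \<in> chart_img d"
  shows "dx (eps_coord eps c d i j) k (x, y) = (\<Sum>m\<in>UNIV. Fd d i m y * pd (Gd c m j) (ax k) x)"
  using pd_eq[OF eps_hasd[OF assms], where v="(ax k, 0)"] by (simp add: dx_def pd_def)

lemma dy_eps: assumes "c \<in> A" "d \<in> A" "x \<in> chart_img c" "y \<in> chart_img d"
  shows "dy (eps_coord eps c d i j) k (x, y) = (\<Sum>m\<in>UNIV. pd (Fd d i m) (ax k) y * Gd c m j x)"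
  using pd_eq[OF eps_hasd[OF assms], where v="(0, ax k)"] by (simp add: dy_def pd_def)

end



type_synonym 'n mat2 = "'n \<Rightarrow> 'n \<Rightarrow> real"

lemma delta_r[simp]: fixes f :: "'n::finite \<Rightarrow> real" shows "(\<Sum>m\<in>UNIV. f m * (if m = u then 1 else (0::real))) = f u"
proof -
  have "(\<Sum>m\<in>UNIV. f m * (if m = u then 1 else (0::real))) = (\<Sum>m\<in>UNIV. if m = u then f m else 0)"
    by (rule sum.cong) auto
  thus ?thesis by simp
qed
lemma delta_l[simp]: fixes f :: "'n::finite \<Rightarrow> real" shows "(\<Sum>m\<in>UNIV. (if u = m then 1 else (0::real)) * f m) = f u"
proof -
  have "(\<Sum>m\<in>UNIV. (if u = m then 1 else (0::real)) * f m) = (\<Sum>m\<in>UNIV. if u = m then f m else 0)"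
    by (rule sum.cong) auto
  thus ?thesis by simp
qed

lemma delta_l2[simp]: fixes f :: "'n::finite \<Rightarrow> real" shows "(\<Sum>m\<in>UNIV. (if m = u then 1 else (0::real)) * f m) = f u"
  using delta_l[of u f] by (simp add: eq_commute)
lemma delta_r2[simp]: fixes f :: "'n::finite \<Rightarrow> real" shows "(\<Sum>m\<in>UNIV. f m * (if u = m then 1 else (0::real))) = f u"
  using delta_r[of f u] by (simp add: eq_commute)

lemma contract_right:
  fixes X :: "'n::finite \<Rightarrow> real" and G F :: "'n \<Rightarrow> 'n \<Rightarrow> real"
  assumes GF: "\<And>b u. (\<Sum>j\<in>UNIV. G b j * F j u) = (if b = u then 1 else 0)"
  shows "(\<Sum>j\<in>UNIV. (\<Sum>b\<in>UNIV. X b * G b j) * F j u) = X u"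
proof -
  have "(\<Sum>j\<in>UNIV. (\<Sum>b\<in>UNIV. X b * G b j) * F j u) = (\<Sum>j\<in>UNIV. \<Sum>b\<in>UNIV. X b * G b j * F j u)"
    by (simp add: sum_distrib_right)
  also have "\<dots> = (\<Sum>b\<in>UNIV. \<Sum>j\<in>UNIV. X b * G b j * F j u)" by (rule sum.swap)
  also have "\<dots> = (\<Sum>b\<in>UNIV. X b * (\<Sum>j\<in>UNIV. G b j * F j u))" by (simp add: sum_distrib_left mult.assoc)
  also have "\<dots> = X u" by (simp add: GF)
  finally show ?thesis .
qed

lemma contract_left:
  fixes Y :: "'n::finite \<Rightarrow> real" and G F :: "'n \<Rightarrow> 'n \<Rightarrow> real"
  assumes FG: "\<And>i a. (\<Sum>m\<in>UNIV. F i m * G m a) = (if i = a then 1 else 0)"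
  shows "(\<Sum>m\<in>UNIV. F i m * (\<Sum>a\<in>UNIV. G m a * Y a)) = Y i"
proof -
  have "(\<Sum>m\<in>UNIV. F i m * (\<Sum>a\<in>UNIV. G m a * Y a)) = (\<Sum>m\<in>UNIV. \<Sum>a\<in>UNIV. F i m * G m a * Y a)"
    by (simp add: sum_distrib_left mult.assoc)
  also have "\<dots> = (\<Sum>a\<in>UNIV. \<Sum>m\<in>UNIV. F i m * G m a * Y a)" by (rule sum.swap)
  also have "\<dots> = (\<Sum>a\<in>UNIV. (\<Sum>m\<in>UNIV. F i m * G m a) * Y a)" by (simp add: sum_distrib_right)
  also have "\<dots> = Y i" by (simp add: FG)
  finally show ?thesis .
qed




definition "Gam dF G k i j = (\<Sum>b\<in>UNIV. dF k i b * G b j)"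
definition "dGam ddF dF G dG r k i j = (\<Sum>b\<in>UNIV. ddF r k i b * G b j + dF k i b * dG r b j)"
definition "R2e ddF dF G dG i r j k =
  (dGam ddF dF G dG r k i j + (\<Sum>a\<in>UNIV. Gam dF G k a r * Gam dF G a i j)) -
  (dGam ddF dF G dG j k i r + (\<Sum>a\<in>UNIV. Gam dF G k a j * Gam dF G a i r))"
definition "Psi dF F i u v = (\<Sum>a\<in>UNIV. dF a i u * F a v - dF a i v * F a u)"
definition "dPsi ddF dF F k i u v = (\<Sum>a\<in>UNIV. (ddF k a i u * F a v + dF a i u * dF k a v) - (ddF k a i v * F a u + dF a i v * dF k a u))"
definition "dS ddF dF F G dG k m u v = (\<Sum>i\<in>UNIV. dG k m i * Psi dF F i u v + G m i * dPsi ddF dF F k i u v)"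

lemma K1:
  fixes F G :: "'n::finite \<Rightarrow> 'n \<Rightarrow> real" and dF dG :: "'n \<Rightarrow> 'n \<Rightarrow> 'n \<Rightarrow> real"
    and ddF :: "'n \<Rightarrow> 'n \<Rightarrow> 'n \<Rightarrow> 'n \<Rightarrow> real"
  assumes FG: "\<And>i j. (\<Sum>m\<in>UNIV. F i m * G m j) = (if i = j then 1 else 0)"
    and GF: "\<And>i j. (\<Sum>m\<in>UNIV. G i m * F m j) = (if i = j then 1 else 0)"
    and dG: "\<And>k a j. dG k a j = - (\<Sum>i\<in>UNIV. G a i * (\<Sum>m\<in>UNIV. dF k i m * G m j))"
    and sym: "\<And>r k i j. ddF r k i j = ddF k r i j"
  shows "(\<Sum>r\<in>UNIV. \<Sum>j\<in>UNIV. R2e ddF dF G dG i r j k * F j u * F r v) = (\<Sum>m\<in>UNIV. F i m * dS ddF dF F G dG k m u v)"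
proof -
  let ?Gam = "Gam dF G" and ?dGam = "dGam ddF dF G dG"
  have H1: "(\<Sum>j\<in>UNIV. ?Gam a i j * F j u) = dF a i u" for a i u
    unfolding Gam_def by (rule contract_right[OF GF])
  have H2: "(\<Sum>j\<in>UNIV. dG r b j * F j u) = - (\<Sum>a\<in>UNIV. G b a * dF r a u)" for r b u
  proof -
    have "(\<Sum>j\<in>UNIV. dG r b j * F j u) = - (\<Sum>j\<in>UNIV. (\<Sum>a\<in>UNIV. G b a * (\<Sum>m\<in>UNIV. dF r a m * G m j)) * F j u)"
      by (simp add: dG sum_negf)
    also have "(\<Sum>j\<in>UNIV. (\<Sum>a\<in>UNIV. G b a * (\<Sum>m\<in>UNIV. dF r a m * G m j)) * F j u)
        = (\<Sum>j\<in>UNIV. \<Sum>a\<in>UNIV. G b a * ((\<Sum>m\<in>UNIV. dF r a m * G m j) * F j u))"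
      by (simp add: sum_distrib_right mult.assoc)
    also have "\<dots> = (\<Sum>a\<in>UNIV. \<Sum>j\<in>UNIV. G b a * ((\<Sum>m\<in>UNIV. dF r a m * G m j) * F j u))" by (rule sum.swap)
    also have "\<dots> = (\<Sum>a\<in>UNIV. G b a * (\<Sum>j\<in>UNIV. (\<Sum>m\<in>UNIV. dF r a m * G m j) * F j u))"
      by (simp add: sum_distrib_left)
    also have "\<dots> = (\<Sum>a\<in>UNIV. G b a * dF r a u)" by (simp add: contract_right[OF GF])
    finally show ?thesis .
  qed
  have H3: "(\<Sum>j\<in>UNIV. ?dGam r k i j * F j u) = ddF r k i u - (\<Sum>a\<in>UNIV. ?Gam k i a * dF r a u)" for r k i u
  proof -
    have "(\<Sum>j\<in>UNIV. ?dGam r k i j * F j u) = (\<Sum>j\<in>UNIV. (\<Sum>b\<in>UNIV. ddF r k i b * G b j) * F j u)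
       + (\<Sum>j\<in>UNIV. (\<Sum>b\<in>UNIV. dF k i b * dG r b j) * F j u)"
      unfolding dGam_def by (simp add: sum.distrib distrib_right)
    also have "(\<Sum>j\<in>UNIV. (\<Sum>b\<in>UNIV. ddF r k i b * G b j) * F j u) = ddF r k i u"
      by (rule contract_right[OF GF])
    also have "(\<Sum>j\<in>UNIV. (\<Sum>b\<in>UNIV. dF k i b * dG r b j) * F j u) = (\<Sum>b\<in>UNIV. dF k i b * (\<Sum>j\<in>UNIV. dG r b j * F j u))"
    proof -
      have "(\<Sum>j\<in>UNIV. (\<Sum>b\<in>UNIV. dF k i b * dG r b j) * F j u) = (\<Sum>j\<in>UNIV. \<Sum>b\<in>UNIV. dF k i b * (dG r b j * F j u))"
        by (simp add: sum_distrib_right mult.assoc)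
      also have "\<dots> = (\<Sum>b\<in>UNIV. \<Sum>j\<in>UNIV. dF k i b * (dG r b j * F j u))" by (rule sum.swap)
      finally show ?thesis by (simp add: sum_distrib_left)
    qed
    also have "\<dots> = - (\<Sum>b\<in>UNIV. dF k i b * (\<Sum>a\<in>UNIV. G b a * dF r a u))" by (simp add: H2 sum_negf)
    also have "(\<Sum>b\<in>UNIV. dF k i b * (\<Sum>a\<in>UNIV. G b a * dF r a u)) = (\<Sum>a\<in>UNIV. ?Gam k i a * dF r a u)"
    proof -
      have "(\<Sum>b\<in>UNIV. dF k i b * (\<Sum>a\<in>UNIV. G b a * dF r a u)) = (\<Sum>b\<in>UNIV. \<Sum>a\<in>UNIV. dF k i b * G b a * dF r a u)"
        by (simp add: sum_distrib_left mult.assoc)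
      also have "\<dots> = (\<Sum>a\<in>UNIV. \<Sum>b\<in>UNIV. dF k i b * G b a * dF r a u)" by (rule sum.swap)
      finally show ?thesis by (simp add: Gam_def sum_distrib_right)
    qed
    finally show ?thesis by simp
  qed
  have H5: "(\<Sum>m\<in>UNIV. F i m * dG k m i') = - ?Gam k i i'" for i i'
  proof -
    have "(\<Sum>m\<in>UNIV. F i m * dG k m i') = - (\<Sum>m\<in>UNIV. F i m * (\<Sum>a\<in>UNIV. G m a * (\<Sum>l\<in>UNIV. dF k a l * G l i')))"
      by (simp add: dG sum_negf)
    also have "\<dots> = - ?Gam k i i'" by (simp add: contract_left[OF FG] Gam_def)
    finally show ?thesis .
  qed
  have T1: "(\<Sum>r\<in>UNIV. \<Sum>j\<in>UNIV. ?dGam r k i j * F j u * F r v) = (\<Sum>r\<in>UNIV. F r v * (ddF r k i u - (\<Sum>a\<in>UNIV. ?Gam k i a * dF r a u)))"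
  proof -
    have "(\<Sum>r\<in>UNIV. \<Sum>j\<in>UNIV. ?dGam r k i j * F j u * F r v) = (\<Sum>r\<in>UNIV. F r v * (\<Sum>j\<in>UNIV. ?dGam r k i j * F j u))"
      by (simp add: sum_distrib_left mult.commute mult.left_commute)
    thus ?thesis by (simp add: H3)
  qed
  have T3: "(\<Sum>r\<in>UNIV. \<Sum>j\<in>UNIV. ?dGam j k i r * F j u * F r v) = (\<Sum>j\<in>UNIV. F j u * (ddF j k i v - (\<Sum>a\<in>UNIV. ?Gam k i a * dF j a v)))"
  proof -
    have "(\<Sum>r\<in>UNIV. \<Sum>j\<in>UNIV. ?dGam j k i r * F j u * F r v) = (\<Sum>j\<in>UNIV. \<Sum>r\<in>UNIV. ?dGam j k i r * F j u * F r v)"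
      by (rule sum.swap)
    also have "\<dots> = (\<Sum>j\<in>UNIV. F j u * (\<Sum>r\<in>UNIV. ?dGam j k i r * F r v))"
      by (simp add: sum_distrib_left mult.commute mult.left_commute)
    finally show ?thesis by (simp add: H3)
  qed
  have T2: "(\<Sum>r\<in>UNIV. \<Sum>j\<in>UNIV. (\<Sum>a\<in>UNIV. ?Gam k a r * ?Gam a i j) * F j u * F r v) = (\<Sum>a\<in>UNIV. dF k a v * dF a i u)" for u v
  proof -
    have "(\<Sum>r\<in>UNIV. \<Sum>j\<in>UNIV. (\<Sum>a\<in>UNIV. ?Gam k a r * ?Gam a i j) * F j u * F r v)
       = (\<Sum>r\<in>UNIV. \<Sum>j\<in>UNIV. \<Sum>a\<in>UNIV. (?Gam k a r * F r v) * (?Gam a i j * F j u))"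
      by (intro sum.cong refl) (simp add: sum_distrib_left sum_distrib_right mult.commute mult.left_commute)
    also have "\<dots> = (\<Sum>r\<in>UNIV. \<Sum>a\<in>UNIV. \<Sum>j\<in>UNIV. (?Gam k a r * F r v) * (?Gam a i j * F j u))"
      by (rule sum.cong[OF refl]) (rule sum.swap)
    also have "\<dots> = (\<Sum>a\<in>UNIV. \<Sum>r\<in>UNIV. \<Sum>j\<in>UNIV. (?Gam k a r * F r v) * (?Gam a i j * F j u))"
      by (rule sum.swap)
    also have "\<dots> = (\<Sum>a\<in>UNIV. (\<Sum>r\<in>UNIV. ?Gam k a r * F r v) * (\<Sum>j\<in>UNIV. ?Gam a i j * F j u))"
      by (simp add: sum_product)
    also have "\<dots> = (\<Sum>a\<in>UNIV. dF k a v * dF a i u)" by (simp add: H1)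
    finally show ?thesis .
  qed
  have LHS: "(\<Sum>r\<in>UNIV. \<Sum>j\<in>UNIV. R2e ddF dF G dG i r j k * F j u * F r v) =
      (\<Sum>r\<in>UNIV. \<Sum>j\<in>UNIV. ?dGam r k i j * F j u * F r v)
    + (\<Sum>r\<in>UNIV. \<Sum>j\<in>UNIV. (\<Sum>a\<in>UNIV. ?Gam k a r * ?Gam a i j) * F j u * F r v)
    - (\<Sum>r\<in>UNIV. \<Sum>j\<in>UNIV. ?dGam j k i r * F j u * F r v)
    - (\<Sum>r\<in>UNIV. \<Sum>j\<in>UNIV. (\<Sum>a\<in>UNIV. ?Gam k a j * ?Gam a i r) * F j u * F r v)"
    unfolding R2e_def by (simp add: algebra_simps sum.distrib sum_subtractf)
  have T4: "(\<Sum>r\<in>UNIV. \<Sum>j\<in>UNIV. (\<Sum>a\<in>UNIV. ?Gam k a j * ?Gam a i r) * F j u * F r v) = (\<Sum>a\<in>UNIV. dF k a u * dF a i v)"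
  proof -
    have "(\<Sum>r\<in>UNIV. \<Sum>j\<in>UNIV. (\<Sum>a\<in>UNIV. ?Gam k a j * ?Gam a i r) * F j u * F r v)
      = (\<Sum>j\<in>UNIV. \<Sum>r\<in>UNIV. (\<Sum>a\<in>UNIV. ?Gam k a j * ?Gam a i r) * F r v * F j u)"
      by (subst sum.swap) (simp add: mult.commute mult.left_commute)
    thus ?thesis using T2[of v u] by simp
  qed
  have RHS: "(\<Sum>m\<in>UNIV. F i m * dS ddF dF F G dG k m u v) = dPsi ddF dF F k i u v - (\<Sum>a\<in>UNIV. ?Gam k i a * Psi dF F a u v)"
  proof -
    have "(\<Sum>m\<in>UNIV. F i m * dS ddF dF F G dG k m u v) =
       (\<Sum>m\<in>UNIV. \<Sum>a\<in>UNIV. F i m * dG k m a * Psi dF F a u v) + (\<Sum>m\<in>UNIV. F i m * (\<Sum>a\<in>UNIV. G m a * dPsi ddF dF F k a u v))"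
      unfolding dS_def by (simp add: sum_distrib_left sum.distrib algebra_simps)
    also have "(\<Sum>m\<in>UNIV. \<Sum>a\<in>UNIV. F i m * dG k m a * Psi dF F a u v) = (\<Sum>a\<in>UNIV. (\<Sum>m\<in>UNIV. F i m * dG k m a) * Psi dF F a u v)"
      by (subst sum.swap) (simp add: sum_distrib_right)
    also have "\<dots> = - (\<Sum>a\<in>UNIV. ?Gam k i a * Psi dF F a u v)" by (simp add: H5 sum_negf)
    also have "(\<Sum>m\<in>UNIV. F i m * (\<Sum>a\<in>UNIV. G m a * dPsi ddF dF F k a u v)) = dPsi ddF dF F k i u v"
      by (rule contract_left[OF FG])
    finally show ?thesis by simp
  qed
  have GP: "(\<Sum>a\<in>UNIV. ?Gam k i a * Psi dF F a u v) =
     (\<Sum>r\<in>UNIV. F r v * (\<Sum>a\<in>UNIV. ?Gam k i a * dF r a u)) - (\<Sum>j\<in>UNIV. F j u * (\<Sum>a\<in>UNIV. ?Gam k i a * dF j a v))"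
  proof -
    have "(\<Sum>a\<in>UNIV. ?Gam k i a * Psi dF F a u v) = (\<Sum>a\<in>UNIV. \<Sum>r\<in>UNIV. ?Gam k i a * dF r a u * F r v) - (\<Sum>a\<in>UNIV. \<Sum>r\<in>UNIV. ?Gam k i a * dF r a v * F r u)"
      unfolding Psi_def by (simp add: sum_distrib_left sum_subtractf algebra_simps)
    also have "(\<Sum>a\<in>UNIV. \<Sum>r\<in>UNIV. ?Gam k i a * dF r a u * F r v) = (\<Sum>r\<in>UNIV. F r v * (\<Sum>a\<in>UNIV. ?Gam k i a * dF r a u))"
      by (subst sum.swap) (simp add: sum_distrib_left mult.commute mult.left_commute)
    also have "(\<Sum>a\<in>UNIV. \<Sum>r\<in>UNIV. ?Gam k i a * dF r a v * F r u) = (\<Sum>r\<in>UNIV. F r u * (\<Sum>a\<in>UNIV. ?Gam k i a * dF r a v))"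
      by (subst sum.swap) (simp add: sum_distrib_left mult.commute mult.left_commute)
    finally show ?thesis .
  qed
  have DP: "dPsi ddF dF F k i u v = (\<Sum>r\<in>UNIV. F r v * ddF r k i u) + (\<Sum>a\<in>UNIV. dF k a v * dF a i u)
      - (\<Sum>j\<in>UNIV. F j u * ddF j k i v) - (\<Sum>a\<in>UNIV. dF k a u * dF a i v)"
    unfolding dPsi_def by (simp add: sum.distrib sum_subtractf algebra_simps sym[of k])
  show ?thesis
    unfolding LHS T1 T2 T3 T4 RHS GP DP
    by (simp add: right_diff_distrib sum_subtractf)
qed




definition "Sfun dF F G m u v = (\<Sum>i\<in>UNIV. G m i * Psi dF F i u v)"
definition "Ae Fy dFy Gx dGx i k j = (\<Sum>m\<in>UNIV. Fy i m * dGx k m j) + (\<Sum>a\<in>UNIV. (\<Sum>m\<in>UNIV. dFy a i m * Gx m j) * (\<Sum>l\<in>UNIV. Fy a l * Gx l k))"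

lemma dG_contract:
  fixes F G :: "'n::finite \<Rightarrow> 'n \<Rightarrow> real" and dF dG :: "'n \<Rightarrow> 'n \<Rightarrow> 'n \<Rightarrow> real"
  assumes GF: "\<And>i j. (\<Sum>m\<in>UNIV. G i m * F m j) = (if i = j then 1 else 0)"
    and dG: "\<And>k a j. dG k a j = - (\<Sum>i\<in>UNIV. G a i * (\<Sum>m\<in>UNIV. dF k i m * G m j))"
  shows "(\<Sum>j\<in>UNIV. dG r b j * F j u) = - (\<Sum>a\<in>UNIV. G b a * dF r a u)"
proof -
  have "(\<Sum>j\<in>UNIV. dG r b j * F j u) = - (\<Sum>j\<in>UNIV. (\<Sum>a\<in>UNIV. G b a * (\<Sum>m\<in>UNIV. dF r a m * G m j)) * F j u)"
    by (simp add: dG sum_negf)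
  also have "(\<Sum>j\<in>UNIV. (\<Sum>a\<in>UNIV. G b a * (\<Sum>m\<in>UNIV. dF r a m * G m j)) * F j u)
      = (\<Sum>j\<in>UNIV. \<Sum>a\<in>UNIV. G b a * ((\<Sum>m\<in>UNIV. dF r a m * G m j) * F j u))"
    by (simp add: sum_distrib_right mult.assoc)
  also have "\<dots> = (\<Sum>a\<in>UNIV. \<Sum>j\<in>UNIV. G b a * ((\<Sum>m\<in>UNIV. dF r a m * G m j) * F j u))" by (rule sum.swap)
  also have "\<dots> = (\<Sum>a\<in>UNIV. G b a * (\<Sum>j\<in>UNIV. (\<Sum>m\<in>UNIV. dF r a m * G m j) * F j u))"
    by (simp add: sum_distrib_left)
  also have "\<dots> = (\<Sum>a\<in>UNIV. G b a * dF r a u)" by (simp add: contract_right[OF GF])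
  finally show ?thesis .
qed

lemma K2:
  fixes Fx Gx Fy Gy :: "'n::finite \<Rightarrow> 'n \<Rightarrow> real" and dFx dGx dFy :: "'n \<Rightarrow> 'n \<Rightarrow> 'n \<Rightarrow> real"
  assumes GFx: "\<And>i j. (\<Sum>m\<in>UNIV. Gx i m * Fx m j) = (if i = j then 1 else 0)"
    and dGx: "\<And>k a j. dGx k a j = - (\<Sum>i\<in>UNIV. Gx a i * (\<Sum>m\<in>UNIV. dFx k i m * Gx m j))"
    and FGy: "\<And>i j. (\<Sum>m\<in>UNIV. Fy i m * Gy m j) = (if i = j then 1 else 0)"
  shows "(\<Sum>k\<in>UNIV. \<Sum>j\<in>UNIV. (Ae Fy dFy Gx dGx i k j - Ae Fy dFy Gx dGx i j k) * Fx j u * Fx k v)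
       = (\<Sum>m\<in>UNIV. Fy i m * (Sfun dFy Fy Gy m u v - Sfun dFx Fx Gx m u v))"
proof -
  have E1: "(\<Sum>k\<in>UNIV. \<Sum>j\<in>UNIV. (\<Sum>m\<in>UNIV. Fy i m * dGx k m j) * Fx j u * Fx k v)
     = - (\<Sum>m\<in>UNIV. Fy i m * (\<Sum>a\<in>UNIV. Gx m a * (\<Sum>k\<in>UNIV. dFx k a u * Fx k v)))" for u v
  proof -
    have "(\<Sum>k\<in>UNIV. \<Sum>j\<in>UNIV. (\<Sum>m\<in>UNIV. Fy i m * dGx k m j) * Fx j u * Fx k v)
       = (\<Sum>k\<in>UNIV. \<Sum>m\<in>UNIV. Fy i m * Fx k v * (\<Sum>j\<in>UNIV. dGx k m j * Fx j u))"
    proof (rule sum.cong[OF refl])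
      fix k
      have "(\<Sum>j\<in>UNIV. (\<Sum>m\<in>UNIV. Fy i m * dGx k m j) * Fx j u * Fx k v) = (\<Sum>j\<in>UNIV. \<Sum>m\<in>UNIV. Fy i m * Fx k v * (dGx k m j * Fx j u))"
        by (simp add: sum_distrib_left sum_distrib_right algebra_simps)
      also have "\<dots> = (\<Sum>m\<in>UNIV. \<Sum>j\<in>UNIV. Fy i m * Fx k v * (dGx k m j * Fx j u))" by (rule sum.swap)
      finally show "(\<Sum>j\<in>UNIV. (\<Sum>m\<in>UNIV. Fy i m * dGx k m j) * Fx j u * Fx k v) = (\<Sum>m\<in>UNIV. Fy i m * Fx k v * (\<Sum>j\<in>UNIV. dGx k m j * Fx j u))"
        by (simp add: sum_distrib_left)
    qed
    also have "\<dots> = (\<Sum>k\<in>UNIV. \<Sum>m\<in>UNIV. - (Fy i m * Fx k v * (\<Sum>a\<in>UNIV. Gx m a * dFx k a u)))"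
      unfolding dG_contract[where G=Gx and F=Fx and dF=dFx and dG=dGx, OF GFx dGx] by simp
    also have "\<dots> = (\<Sum>m\<in>UNIV. \<Sum>k\<in>UNIV. - (Fy i m * Fx k v * (\<Sum>a\<in>UNIV. Gx m a * dFx k a u)))"
      by (rule sum.swap)
    also have "\<dots> = - (\<Sum>m\<in>UNIV. Fy i m * (\<Sum>a\<in>UNIV. Gx m a * (\<Sum>k\<in>UNIV. dFx k a u * Fx k v)))"
    proof -
      have "(\<Sum>k\<in>UNIV. Fx k v * (\<Sum>a\<in>UNIV. Gx m a * dFx k a u)) = (\<Sum>a\<in>UNIV. Gx m a * (\<Sum>k\<in>UNIV. dFx k a u * Fx k v))" for m
      proof -
        have "(\<Sum>k\<in>UNIV. Fx k v * (\<Sum>a\<in>UNIV. Gx m a * dFx k a u)) = (\<Sum>k\<in>UNIV. \<Sum>a\<in>UNIV. Gx m a * (dFx k a u * Fx k v))"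
          by (simp add: sum_distrib_left algebra_simps)
        also have "\<dots> = (\<Sum>a\<in>UNIV. \<Sum>k\<in>UNIV. Gx m a * (dFx k a u * Fx k v))" by (rule sum.swap)
        finally show ?thesis by (simp add: sum_distrib_left)
      qed
      thus ?thesis by (simp add: sum_negf sum_distrib_left[symmetric] mult.assoc)
    qed
    finally show ?thesis .
  qed
  have E2: "(\<Sum>k\<in>UNIV. \<Sum>j\<in>UNIV. (\<Sum>a\<in>UNIV. (\<Sum>m\<in>UNIV. dFy a i m * Gx m j) * (\<Sum>l\<in>UNIV. Fy a l * Gx l k)) * Fx j u * Fx k v)
      = (\<Sum>a\<in>UNIV. dFy a i u * Fy a v)" for u v
  proof -
    have "(\<Sum>k\<in>UNIV. \<Sum>j\<in>UNIV. (\<Sum>a\<in>UNIV. (\<Sum>m\<in>UNIV. dFy a i m * Gx m j) * (\<Sum>l\<in>UNIV. Fy a l * Gx l k)) * Fx j u * Fx k v)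
      = (\<Sum>k\<in>UNIV. \<Sum>j\<in>UNIV. \<Sum>a\<in>UNIV. ((\<Sum>m\<in>UNIV. dFy a i m * Gx m j) * Fx j u) * ((\<Sum>l\<in>UNIV. Fy a l * Gx l k) * Fx k v))"
      by (rule sum.cong[OF refl])+ (simp add: sum_distrib_left sum_distrib_right algebra_simps)
    also have "\<dots> = (\<Sum>k\<in>UNIV. \<Sum>a\<in>UNIV. \<Sum>j\<in>UNIV. ((\<Sum>m\<in>UNIV. dFy a i m * Gx m j) * Fx j u) * ((\<Sum>l\<in>UNIV. Fy a l * Gx l k) * Fx k v))"
      by (rule sum.cong[OF refl]) (rule sum.swap)
    also have "\<dots> = (\<Sum>a\<in>UNIV. \<Sum>k\<in>UNIV. \<Sum>j\<in>UNIV. ((\<Sum>m\<in>UNIV. dFy a i m * Gx m j) * Fx j u) * ((\<Sum>l\<in>UNIV. Fy a l * Gx l k) * Fx k v))"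
      by (rule sum.swap)
    also have "\<dots> = (\<Sum>a\<in>UNIV. (\<Sum>j\<in>UNIV. (\<Sum>m\<in>UNIV. dFy a i m * Gx m j) * Fx j u) * (\<Sum>k\<in>UNIV. (\<Sum>l\<in>UNIV. Fy a l * Gx l k) * Fx k v))"
      by (rule sum.cong[OF refl]) (simp add: sum_product mult.commute)
    also have "\<dots> = (\<Sum>a\<in>UNIV. dFy a i u * Fy a v)" by (simp add: contract_right[OF GFx])
    finally show ?thesis .
  qed
  have split: "(\<Sum>k\<in>UNIV. \<Sum>j\<in>UNIV. (Ae Fy dFy Gx dGx i k j - Ae Fy dFy Gx dGx i j k) * Fx j u * Fx k v)
     = (\<Sum>k\<in>UNIV. \<Sum>j\<in>UNIV. Ae Fy dFy Gx dGx i k j * Fx j u * Fx k v) - (\<Sum>k\<in>UNIV. \<Sum>j\<in>UNIV. Ae Fy dFy Gx dGx i k j * Fx j v * Fx k u)"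
  proof -
    have "(\<Sum>k\<in>UNIV. \<Sum>j\<in>UNIV. Ae Fy dFy Gx dGx i j k * Fx j u * Fx k v) = (\<Sum>k\<in>UNIV. \<Sum>j\<in>UNIV. Ae Fy dFy Gx dGx i k j * Fx j v * Fx k u)"
      by (subst sum.swap) (simp add: mult.commute mult.left_commute)
    thus ?thesis by (simp add: left_diff_distrib sum_subtractf)
  qed
  have AA: "(\<Sum>k\<in>UNIV. \<Sum>j\<in>UNIV. Ae Fy dFy Gx dGx i k j * Fx j u * Fx k v) =
     - (\<Sum>m\<in>UNIV. Fy i m * (\<Sum>a\<in>UNIV. Gx m a * (\<Sum>k\<in>UNIV. dFx k a u * Fx k v))) + (\<Sum>a\<in>UNIV. dFy a i u * Fy a v)" for u v
    unfolding Ae_def E1[symmetric] E2[symmetric] by (simp add: distrib_right sum.distrib)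
  have SY: "(\<Sum>m\<in>UNIV. Fy i m * Sfun dFy Fy Gy m u v) = Psi dFy Fy i u v"
    unfolding Sfun_def by (rule contract_left[OF FGy])
  have SX: "Sfun dFx Fx Gx m u v = (\<Sum>a\<in>UNIV. Gx m a * (\<Sum>k\<in>UNIV. dFx k a u * Fx k v)) - (\<Sum>a\<in>UNIV. Gx m a * (\<Sum>k\<in>UNIV. dFx k a v * Fx k u))" for m
    unfolding Sfun_def Psi_def by (simp add: sum_subtractf right_diff_distrib)
  have PY: "Psi dFy Fy i u v = (\<Sum>a\<in>UNIV. dFy a i u * Fy a v) - (\<Sum>a\<in>UNIV. dFy a i v * Fy a u)"
    unfolding Psi_def by (simp add: sum_subtractf)
  show ?thesis
    unfolding split AA right_diff_distrib sum_subtractf SY SX PY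
    by simp
qed

lemma contract2_inv:
  fixes F G :: "'n::finite \<Rightarrow> 'n \<Rightarrow> real" and T :: "'n \<Rightarrow> 'n \<Rightarrow> real"
  assumes FG: "\<And>i j. (\<Sum>m\<in>UNIV. F i m * G m j) = (if i = j then 1 else 0)"
    and Z: "\<And>u v. (\<Sum>k\<in>UNIV. \<Sum>j\<in>UNIV. T k j * F j u * F k v) = 0"
  shows "T k j = 0"
proof -
  have "T k j = (\<Sum>v\<in>UNIV. \<Sum>u\<in>UNIV. (\<Sum>k'\<in>UNIV. \<Sum>j'\<in>UNIV. T k' j' * F j' u * F k' v) * G u j * G v k)"
  proof -
    have "(\<Sum>v\<in>UNIV. \<Sum>u\<in>UNIV. (\<Sum>k'\<in>UNIV. \<Sum>j'\<in>UNIV. T k' j' * F j' u * F k' v) * G u j * G v k)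
       = (\<Sum>v\<in>UNIV. \<Sum>k'\<in>UNIV. F k' v * G v k * (\<Sum>j'\<in>UNIV. T k' j' * (\<Sum>u\<in>UNIV. F j' u * G u j)))"
    proof (rule sum.cong[OF refl])
      fix v
      have "(\<Sum>u\<in>UNIV. (\<Sum>k'\<in>UNIV. \<Sum>j'\<in>UNIV. T k' j' * F j' u * F k' v) * G u j * G v k)
        = (\<Sum>u\<in>UNIV. \<Sum>k'\<in>UNIV. \<Sum>j'\<in>UNIV. F k' v * G v k * (T k' j' * (F j' u * G u j)))"
        by (simp add: sum_distrib_left sum_distrib_right algebra_simps)
      also have "\<dots> = (\<Sum>k'\<in>UNIV. \<Sum>u\<in>UNIV. \<Sum>j'\<in>UNIV. F k' v * G v k * (T k' j' * (F j' u * G u j)))"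
        by (rule sum.swap)
      also have "\<dots> = (\<Sum>k'\<in>UNIV. \<Sum>j'\<in>UNIV. \<Sum>u\<in>UNIV. F k' v * G v k * (T k' j' * (F j' u * G u j)))"
        by (rule sum.cong[OF refl]) (rule sum.swap)
      also have "\<dots> = (\<Sum>k'\<in>UNIV. F k' v * G v k * (\<Sum>j'\<in>UNIV. T k' j' * (\<Sum>u\<in>UNIV. F j' u * G u j)))"
        by (simp add: sum_distrib_left)
      finally show "(\<Sum>u\<in>UNIV. (\<Sum>k'\<in>UNIV. \<Sum>j'\<in>UNIV. T k' j' * F j' u * F k' v) * G u j * G v k)
        = (\<Sum>k'\<in>UNIV. F k' v * G v k * (\<Sum>j'\<in>UNIV. T k' j' * (\<Sum>u\<in>UNIV. F j' u * G u j)))" .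
    qed
    also have "\<dots> = (\<Sum>v\<in>UNIV. \<Sum>k'\<in>UNIV. F k' v * G v k * T k' j)" by (simp add: FG)
    also have "\<dots> = (\<Sum>k'\<in>UNIV. \<Sum>v\<in>UNIV. F k' v * G v k * T k' j)" by (rule sum.swap)
    also have "\<dots> = (\<Sum>k'\<in>UNIV. (\<Sum>v\<in>UNIV. F k' v * G v k) * T k' j)" by (simp add: sum_distrib_right)
    also have "\<dots> = T k j" by (simp add: FG)
    finally show ?thesis by simp
  qed
  also have "\<dots> = 0" by (simp add: Z)
  finally show ?thesis .
qed

lemma contract1_inv:
  fixes F G :: "'n::finite \<Rightarrow> 'n \<Rightarrow> real" and X :: "'n \<Rightarrow> real"
  assumes GF: "\<And>i j. (\<Sum>m\<in>UNIV. G i m * F m j) = (if i = j then 1 else 0)"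
    and Z: "\<And>i. (\<Sum>m\<in>UNIV. F i m * X m) = 0"
  shows "X m = 0"
proof -
  have "X m = (\<Sum>i\<in>UNIV. G m i * (\<Sum>m'\<in>UNIV. F i m' * X m'))"
    using contract_left[of G F m X] GF by simp
  also have "\<dots> = 0" by (simp add: Z)
  finally show ?thesis .
qed




definition hpd :: "(real^'n::finite \<Rightarrow> real) \<Rightarrow> real^'n \<Rightarrow> ('n \<Rightarrow> real) \<Rightarrow> bool" where
  "hpd f y P \<longleftrightarrow> (f has_derivative (\<lambda>h. \<Sum>k\<in>UNIV. h $ k * P k)) (at y)"

lemma hpd_smooth: "smooth_fun V f \<Longrightarrow> open V \<Longrightarrow> y \<in> V \<Longrightarrow> hpd f y (\<lambda>k. pd f (ax k) y)"
  unfolding hpd_def by (rule smooth_hasd_vec)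

lemma hpd_pd: "hpd f y P \<Longrightarrow> pd f (ax k) y = P k"
  unfolding hpd_def by (drule pd_eq[where v="ax k"]) simp

lemma hpd_mult: "hpd f y P \<Longrightarrow> hpd g y Q \<Longrightarrow> hpd (\<lambda>y. f y * g y) y (\<lambda>k. P k * g y + f y * Q k)"
  unfolding hpd_def
  by (drule (1) has_derivative_mult) (simp add: sum_distrib_left sum_distrib_right sum.distrib algebra_simps)

lemma hpd_add: "hpd f y P \<Longrightarrow> hpd g y Q \<Longrightarrow> hpd (\<lambda>y. f y + g y) y (\<lambda>k. P k + Q k)"
  unfolding hpd_def by (drule (1) has_derivative_add) (simp add: sum.distrib algebra_simps)

lemma hpd_diff: "hpd f y P \<Longrightarrow> hpd g y Q \<Longrightarrow> hpd (\<lambda>y. f y - g y) y (\<lambda>k. P k - Q k)"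
  unfolding hpd_def by (drule (1) has_derivative_diff) (simp add: sum_subtractf algebra_simps)

lemma hpd_const: "hpd (\<lambda>y. c) y (\<lambda>k. 0)"
  unfolding hpd_def by simp

lemma hpd_sum: "(\<And>m. hpd (f m) y (P m)) \<Longrightarrow> hpd (\<lambda>y. \<Sum>m\<in>UNIV. f m y) y (\<lambda>k. \<Sum>m\<in>UNIV. P m k)"
  unfolding hpd_def
proof -
  assume "\<And>m. (f m has_derivative (\<lambda>h. \<Sum>k\<in>UNIV. h $ k * P m k)) (at y)"
  hence "((\<lambda>y. \<Sum>m\<in>UNIV. f m y) has_derivative (\<lambda>h. \<Sum>m\<in>UNIV. \<Sum>k\<in>UNIV. h $ k * P m k)) (at y)"
    by (intro has_derivative_sum) auto
  moreover have "(\<lambda>h. \<Sum>m\<in>UNIV. \<Sum>k\<in>UNIV. h $ k * P m k) = (\<lambda>h. \<Sum>k\<in>UNIV. h $ k * (\<Sum>m\<in>UNIV. P m k))"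
    by (rule ext, subst sum.swap) (simp add: sum_distrib_left)
  ultimately show "((\<lambda>y. \<Sum>m\<in>UNIV. f m y) has_derivative (\<lambda>h. \<Sum>k\<in>UNIV. h $ k * (\<Sum>m\<in>UNIV. P m k))) (at y)"
    by simp
qed

lemma hpd_cong: "open V \<Longrightarrow> y \<in> V \<Longrightarrow> (\<And>w. w \<in> V \<Longrightarrow> f w = g w) \<Longrightarrow> hpd f y P \<Longrightarrow> hpd g y P"
  unfolding hpd_def using has_derivative_transform_within_open[of f _ y UNIV V g] by blast

lemma hpd_unique: "hpd f y P \<Longrightarrow> hpd f y Q \<Longrightarrow> P = Q"
  using hpd_pd by (metis ext)

lemma hpd_eqP: "hpd f y P \<Longrightarrow> (\<And>k. P k = Q k) \<Longrightarrow> hpd f y Q"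
  by (metis ext)

context splb
begin

definition "dF c k i j y = pd (Fd c i j) (ax k) y"
definition "ddF c r k i j y = pd (pd (Fd c i j) (ax k)) (ax r) y"
definition "dG c k i j y = pd (Gd c i j) (ax k) y"

lemma hpd_F: "c \<in> A \<Longrightarrow> y \<in> chart_img c \<Longrightarrow> hpd (Fd c i j) y (\<lambda>k. dF c k i j y)"
  unfolding dF_def using hpd_smooth[OF Fd_smooth open_img] by blast
lemma hpd_G: "c \<in> A \<Longrightarrow> y \<in> chart_img c \<Longrightarrow> hpd (Gd c i j) y (\<lambda>k. dG c k i j y)"
  unfolding dG_def using hpd_smooth[OF Gd_smooth open_img] by blast
lemma hpd_dF: "c \<in> A \<Longrightarrow> y \<in> chart_img c \<Longrightarrow> hpd (dF c a i j) y (\<lambda>k. ddF c k a i j y)"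
  unfolding dF_def[abs_def] ddF_def using hpd_smooth[OF smooth_pd_ax[OF Fd_smooth] open_img] by blast

lemma FG: "c \<in> A \<Longrightarrow> y \<in> chart_img c \<Longrightarrow> (\<Sum>m\<in>UNIV. Fd c i m y * Gd c m j y) = (if i = j then 1 else 0)"
  by (rule M2)
lemma GF: "c \<in> A \<Longrightarrow> y \<in> chart_img c \<Longrightarrow> (\<Sum>m\<in>UNIV. Gd c i m y * Fd c m j y) = (if i = j then 1 else 0)"
  by (rule M3)

lemma ddF_sym: "c \<in> A \<Longrightarrow> y \<in> chart_img c \<Longrightarrow> ddF c r k i j y = ddF c k r i j y"
  unfolding ddF_def by (rule smooth_schwarz[OF Fd_smooth open_img])

lemma dG_formula:
  assumes c: "c \<in> A" and y: "y \<in> chart_img c"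
  shows "dG c k a j y = - (\<Sum>i\<in>UNIV. Gd c a i y * (\<Sum>m\<in>UNIV. dF c k i m y * Gd c m j y))"
proof -
  have Z: "(\<Sum>m\<in>UNIV. dF c k i m y * Gd c m j y + Fd c i m y * dG c k m j y) = 0" for i
  proof -
    have h1: "hpd (\<lambda>y. \<Sum>m\<in>UNIV. Fd c i m y * Gd c m j y) y (\<lambda>k. \<Sum>m\<in>UNIV. dF c k i m y * Gd c m j y + Fd c i m y * dG c k m j y)"
      by (intro hpd_sum hpd_mult hpd_F hpd_G c y)
    have h2: "hpd (\<lambda>y. \<Sum>m\<in>UNIV. Fd c i m y * Gd c m j y) y (\<lambda>k. 0)"
      by (rule hpd_cong[OF open_img[OF c] y _ hpd_const[of "if i = j then 1 else 0"]]) (simp add: FG[OF c])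
    show ?thesis using hpd_unique[OF h1 h2] by metis
  qed
  have "dG c k a j y = (\<Sum>i\<in>UNIV. Gd c a i y * (\<Sum>m\<in>UNIV. Fd c i m y * dG c k m j y))"
    using contract_left[of "\<lambda>i m. Gd c i m y" "\<lambda>i m. Fd c i m y" a "\<lambda>m. dG c k m j y"] GF[OF c y] by simp
  also have "\<dots> = (\<Sum>i\<in>UNIV. Gd c a i y * (- (\<Sum>m\<in>UNIV. dF c k i m y * Gd c m j y)))"
  proof (rule sum.cong[OF refl])
    fix i
    have "(\<Sum>m\<in>UNIV. Fd c i m y * dG c k m j y) = - (\<Sum>m\<in>UNIV. dF c k i m y * Gd c m j y)"
      using Z[of i] by (simp add: sum.distrib eq_neg_iff_add_eq_0 add.commute)
    thus "Gd c a i y * (\<Sum>m\<in>UNIV. Fd c i m y * dG c k m j y) = Gd c a i y * - (\<Sum>m\<in>UNIV. dF c k i m y * Gd c m j y)"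
      by simp
  qed
  finally show ?thesis by (simp add: sum_negf)
qed

lemma Gamma_eq: "c \<in> A \<Longrightarrow> y \<in> chart_img c \<Longrightarrow>
   Gamma eps c i k j y = Gam (\<lambda>k i j. dF c k i j y) (\<lambda>i j. Gd c i j y) k i j"
  unfolding Gamma_def Gam_def dF_def by (simp add: dy_eps)

lemma dGamma_eq:
  assumes c: "c \<in> A" and y: "y \<in> chart_img c"
  shows "frechet_derivative (Gamma eps c i k j) (at y) (ax r) =
    dGam (\<lambda>r k i j. ddF c r k i j y) (\<lambda>k i j. dF c k i j y) (\<lambda>i j. Gd c i j y) (\<lambda>k i j. dG c k i j y) r k i j"
proof -
  have "hpd (\<lambda>y. \<Sum>b\<in>UNIV. dF c k i b y * Gd c b j y) y
      (\<lambda>r. \<Sum>b\<in>UNIV. ddF c r k i b y * Gd c b j y + dF c k i b y * dG c r b j y)"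
    by (intro hpd_sum hpd_mult hpd_dF hpd_G c y)
  hence "hpd (Gamma eps c i k j) y (\<lambda>r. \<Sum>b\<in>UNIV. ddF c r k i b y * Gd c b j y + dF c k i b y * dG c r b j y)"
    by (rule hpd_cong[OF open_img[OF c] y, rotated]) (simp add: Gamma_eq[OF c] Gam_def)
  from hpd_pd[OF this, of r] show ?thesis by (simp add: pd_def dGam_def)
qed

lemma curvR2_eq:
  assumes c: "c \<in> A" and y: "y \<in> chart_img c"
  shows "curvR2 eps c i r j k y =
    R2e (\<lambda>r k i j. ddF c r k i j y) (\<lambda>k i j. dF c k i j y) (\<lambda>i j. Gd c i j y) (\<lambda>k i j. dG c k i j y) i r j k"
  unfolding curvR2_def B_coeff_def R2e_def
  by (simp add: dGamma_eq[OF c y] Gamma_eq[OF c y])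

definition "sf c m u v y = Sfun (\<lambda>k i j. dF c k i j y) (\<lambda>i j. Fd c i j y) (\<lambda>i j. Gd c i j y) m u v"

lemma hpd_sf:
  assumes c: "c \<in> A" and y: "y \<in> chart_img c"
  shows "hpd (sf c m u v) y (\<lambda>k. dS (\<lambda>r k i j. ddF c r k i j y) (\<lambda>k i j. dF c k i j y) (\<lambda>i j. Fd c i j y)
       (\<lambda>i j. Gd c i j y) (\<lambda>k i j. dG c k i j y) k m u v)"
proof -
  have "hpd (\<lambda>y. \<Sum>i\<in>UNIV. Gd c m i y * (\<Sum>a\<in>UNIV. dF c a i u y * Fd c a v y - dF c a i v y * Fd c a u y)) y
     (\<lambda>k. \<Sum>i\<in>UNIV. dG c k m i y * (\<Sum>a\<in>UNIV. dF c a i u y * Fd c a v y - dF c a i v y * Fd c a u y) +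
        Gd c m i y * (\<Sum>a\<in>UNIV. (ddF c k a i u y * Fd c a v y + dF c a i u y * dF c k a v y) -
            (ddF c k a i v y * Fd c a u y + dF c a i v y * dF c k a u y)))"
    by (intro hpd_sum hpd_mult hpd_diff hpd_dF hpd_F hpd_G c y)
  thus ?thesis
    unfolding sf_def[abs_def] Sfun_def Psi_def dS_def dPsi_def .
qed

end



lemma K3:
  fixes Fc Gc Gd J T :: "'n::finite \<Rightarrow> 'n \<Rightarrow> real" and dFc dJ :: "'n \<Rightarrow> 'n \<Rightarrow> 'n \<Rightarrow> real"
  assumes FGc: "\<And>i j. (\<Sum>m\<in>UNIV. Fc i m * Gc m j) = (if i = j then 1 else 0)"
    and TJ: "\<And>b l. (\<Sum>a\<in>UNIV. T b a * J a l) = (if b = l then 1 else 0)"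
    and sym: "\<And>b i m. dJ b i m = dJ m i b"
    and GFd: "\<And>i j. (\<Sum>m\<in>UNIV. Gd i m * (\<Sum>m'\<in>UNIV. J m m' * Fc m' j)) = (if i = j then 1 else 0)"
  shows "Sfun (\<lambda>a i j. \<Sum>m\<in>UNIV. (\<Sum>b\<in>UNIV. dJ b i m * T b a) * Fc m j + J i m * (\<Sum>b\<in>UNIV. dFc b m j * T b a))
              (\<lambda>i j. \<Sum>m\<in>UNIV. J i m * Fc m j) Gd mm u v = Sfun dFc Fc Gc mm u v"
proof -
  define Fd where "Fd i j = (\<Sum>m\<in>UNIV. J i m * Fc m j)" for i j
  define dFd where "dFd a i j = (\<Sum>m\<in>UNIV. (\<Sum>b\<in>UNIV. dJ b i m * T b a) * Fc m j + J i m * (\<Sum>b\<in>UNIV. dFc b m j * T b a))" for a i j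
  have TFd: "(\<Sum>a\<in>UNIV. T b a * Fd a v) = Fc b v" for b v
  proof -
    have "(\<Sum>a\<in>UNIV. T b a * Fd a v) = (\<Sum>a\<in>UNIV. \<Sum>l\<in>UNIV. T b a * J a l * Fc l v)"
      unfolding Fd_def by (simp add: sum_distrib_left mult.assoc)
    also have "\<dots> = (\<Sum>l\<in>UNIV. \<Sum>a\<in>UNIV. T b a * J a l * Fc l v)" by (rule sum.swap)
    also have "\<dots> = (\<Sum>l\<in>UNIV. (\<Sum>a\<in>UNIV. T b a * J a l) * Fc l v)" by (simp add: sum_distrib_right)
    also have "\<dots> = Fc b v" by (simp add: TJ)
    finally show ?thesis .
  qed
  have S1: "(\<Sum>a\<in>UNIV. dFd a i u * Fd a v) = (\<Sum>m\<in>UNIV. \<Sum>b\<in>UNIV. (dJ b i m * Fc m u + J i m * dFc b m u) * Fc b v)" for i u v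
  proof -
    have e: "dFd a i u = (\<Sum>m\<in>UNIV. \<Sum>b\<in>UNIV. (dJ b i m * Fc m u + J i m * dFc b m u) * T b a)" for a
      unfolding dFd_def by (rule sum.cong[OF refl]) (simp add: sum_distrib_left sum_distrib_right sum.distrib algebra_simps)
    have "(\<Sum>a\<in>UNIV. dFd a i u * Fd a v) = (\<Sum>a\<in>UNIV. \<Sum>m\<in>UNIV. \<Sum>b\<in>UNIV. (dJ b i m * Fc m u + J i m * dFc b m u) * (T b a * Fd a v))"
      unfolding e by (simp add: sum_distrib_right mult.assoc)
    also have "\<dots> = (\<Sum>m\<in>UNIV. \<Sum>a\<in>UNIV. \<Sum>b\<in>UNIV. (dJ b i m * Fc m u + J i m * dFc b m u) * (T b a * Fd a v))"
      by (rule sum.swap)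
    also have "\<dots> = (\<Sum>m\<in>UNIV. \<Sum>b\<in>UNIV. \<Sum>a\<in>UNIV. (dJ b i m * Fc m u + J i m * dFc b m u) * (T b a * Fd a v))"
      by (rule sum.cong[OF refl]) (rule sum.swap)
    also have "\<dots> = (\<Sum>m\<in>UNIV. \<Sum>b\<in>UNIV. (dJ b i m * Fc m u + J i m * dFc b m u) * (\<Sum>a\<in>UNIV. T b a * Fd a v))"
      by (simp add: sum_distrib_left)
    also have "\<dots> = (\<Sum>m\<in>UNIV. \<Sum>b\<in>UNIV. (dJ b i m * Fc m u + J i m * dFc b m u) * Fc b v)"
      by (simp add: TFd)
    finally show ?thesis .
  qed
  have S3: "(\<Sum>m\<in>UNIV. \<Sum>b\<in>UNIV. dJ b i m * Fc m u * Fc b v) = (\<Sum>m\<in>UNIV. \<Sum>b\<in>UNIV. dJ b i m * Fc m v * Fc b u)" for i u v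
  proof -
    have "(\<Sum>m\<in>UNIV. \<Sum>b\<in>UNIV. dJ b i m * Fc m v * Fc b u) = (\<Sum>b\<in>UNIV. \<Sum>m\<in>UNIV. dJ b i m * Fc m v * Fc b u)"
      by (rule sum.swap)
    also have "\<dots> = (\<Sum>b\<in>UNIV. \<Sum>m\<in>UNIV. dJ m i b * Fc b u * Fc m v)"
      by (simp add: sym[of _ i] mult.commute mult.left_commute)
    finally show ?thesis by simp
  qed
  have S2: "Psi dFd Fd i u v = (\<Sum>m\<in>UNIV. J i m * Psi dFc Fc m u v)" for i u v
  proof -
    have "Psi dFd Fd i u v = (\<Sum>a\<in>UNIV. dFd a i u * Fd a v) - (\<Sum>a\<in>UNIV. dFd a i v * Fd a u)"
      unfolding Psi_def by (simp add: sum_subtractf)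
    also have "\<dots> = ((\<Sum>m\<in>UNIV. \<Sum>b\<in>UNIV. dJ b i m * Fc m u * Fc b v) + (\<Sum>m\<in>UNIV. J i m * (\<Sum>b\<in>UNIV. dFc b m u * Fc b v)))
       - ((\<Sum>m\<in>UNIV. \<Sum>b\<in>UNIV. dJ b i m * Fc m v * Fc b u) + (\<Sum>m\<in>UNIV. J i m * (\<Sum>b\<in>UNIV. dFc b m v * Fc b u)))"
      unfolding S1 by (simp add: sum.distrib distrib_right sum_distrib_left mult.assoc)
    also have "\<dots> = (\<Sum>m\<in>UNIV. J i m * Psi dFc Fc m u v)"
      unfolding S3 Psi_def by (simp add: sum_subtractf right_diff_distrib sum_distrib_left)
    finally show ?thesis .
  qed
  have S4: "(\<Sum>i\<in>UNIV. Gd mm i * J i m') = Gc mm m'" for m'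
  proof -
    define K where "K m'' = (\<Sum>i\<in>UNIV. Gd mm i * J i m'')" for m''
    have KF: "(\<Sum>m''\<in>UNIV. K m'' * Fc m'' j) = (if mm = j then 1 else 0)" for j
    proof -
      have "(\<Sum>m''\<in>UNIV. K m'' * Fc m'' j) = (\<Sum>m''\<in>UNIV. \<Sum>i\<in>UNIV. Gd mm i * (J i m'' * Fc m'' j))"
        unfolding K_def by (simp add: sum_distrib_right mult.assoc)
      also have "\<dots> = (\<Sum>i\<in>UNIV. \<Sum>m''\<in>UNIV. Gd mm i * (J i m'' * Fc m'' j))" by (rule sum.swap)
      also have "\<dots> = (\<Sum>i\<in>UNIV. Gd mm i * (\<Sum>m''\<in>UNIV. J i m'' * Fc m'' j))" by (simp add: sum_distrib_left)
      finally show ?thesis using GFd by simp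
    qed
    have "K m' = (\<Sum>j\<in>UNIV. (\<Sum>m''\<in>UNIV. K m'' * Fc m'' j) * Gc j m')"
    proof -
      have "(\<Sum>j\<in>UNIV. (\<Sum>m''\<in>UNIV. K m'' * Fc m'' j) * Gc j m') = (\<Sum>j\<in>UNIV. \<Sum>m''\<in>UNIV. K m'' * (Fc m'' j * Gc j m'))"
        by (simp add: sum_distrib_right mult.assoc)
      also have "\<dots> = (\<Sum>m''\<in>UNIV. \<Sum>j\<in>UNIV. K m'' * (Fc m'' j * Gc j m'))" by (rule sum.swap)
      also have "\<dots> = (\<Sum>m''\<in>UNIV. K m'' * (\<Sum>j\<in>UNIV. Fc m'' j * Gc j m'))" by (simp add: sum_distrib_left)
      also have "\<dots> = K m'" by (simp add: FGc)
      finally show ?thesis by simp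
    qed
    also have "\<dots> = Gc mm m'" by (simp add: KF)
    finally show ?thesis by (simp add: K_def)
  qed
  have "Sfun dFd Fd Gd mm u v = (\<Sum>i\<in>UNIV. Gd mm i * (\<Sum>m\<in>UNIV. J i m * Psi dFc Fc m u v))"
    unfolding Sfun_def S2 ..
  also have "\<dots> = (\<Sum>m\<in>UNIV. \<Sum>i\<in>UNIV. Gd mm i * J i m * Psi dFc Fc m u v)"
    by (subst sum.swap) (simp add: sum_distrib_left mult.assoc)
  also have "\<dots> = (\<Sum>m\<in>UNIV. Gc mm m * Psi dFc Fc m u v)"
    by (simp add: sum_distrib_right[symmetric] S4)
  also have "\<dots> = Sfun dFc Fc Gc mm u v" by (simp add: Sfun_def)
  finally show ?thesis unfolding Fd_def dFd_def .
qed




lemma vec_hasd: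
  fixes t :: "real^'n::finite \<Rightarrow> real^'m::finite"
  assumes "\<And>b. ((\<lambda>y. t y $ b) has_derivative (\<lambda>h. D h $ b)) (at y0)"
  shows "(t has_derivative D) (at y0)"
proof (subst has_derivative_componentwise_within, intro ballI)
  fix i :: "real^'m" assume "i \<in> Basis"
  then obtain b where i: "i = axis b 1" using axis_inverse by blast
  show "((\<lambda>x. t x \<bullet> i) has_derivative (\<lambda>x. D x \<bullet> i)) (at y0)"
    using assms[of b] unfolding i by (simp add: cart_eq_inner_axis[symmetric])
qed

lemma hpd_chain:
  fixes t :: "real^'n::finite \<Rightarrow> real^'m::finite"
  assumes tD: "\<And>b. hpd (\<lambda>y. t y $ b) y0 (Q b)" and g: "hpd g (t y0) P"
  shows "hpd (\<lambda>y. g (t y)) y0 (\<lambda>a. \<Sum>b\<in>UNIV. P b * Q b a)"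
proof -
  let ?D = "\<lambda>h. \<chi> b. \<Sum>a\<in>UNIV. h $ a * Q b a"
  have "(t has_derivative ?D) (at y0)"
    by (rule vec_hasd) (use tD in \<open>simp add: hpd_def\<close>)
  from has_derivative_compose[OF this g[unfolded hpd_def]]
  have "((\<lambda>y. g (t y)) has_derivative (\<lambda>h. \<Sum>b\<in>UNIV. (\<Sum>a\<in>UNIV. h $ a * Q b a) * P b)) (at y0)"
    by simp
  moreover have "(\<lambda>h. \<Sum>b\<in>UNIV. (\<Sum>a\<in>UNIV. h $ a * Q b a) * P b) = (\<lambda>h. \<Sum>a\<in>UNIV. h $ a * (\<Sum>b\<in>UNIV. P b * Q b a))"
  proof
    fix h :: "real^'n"
    have "(\<Sum>b\<in>UNIV. (\<Sum>a\<in>UNIV. h $ a * Q b a) * P b) = (\<Sum>b\<in>UNIV. \<Sum>a\<in>UNIV. h $ a * (P b * Q b a))"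
      by (simp add: sum_distrib_left sum_distrib_right algebra_simps)
    also have "\<dots> = (\<Sum>a\<in>UNIV. \<Sum>b\<in>UNIV. h $ a * (P b * Q b a))" by (rule sum.swap)
    finally show "(\<Sum>b\<in>UNIV. (\<Sum>a\<in>UNIV. h $ a * Q b a) * P b) = (\<Sum>a\<in>UNIV. h $ a * (\<Sum>b\<in>UNIV. P b * Q b a))"
      by (simp add: sum_distrib_left)
  qed
  ultimately show ?thesis unfolding hpd_def by simp
qed

lemma hpd_coord: fixes x :: "real^'n::finite" shows "hpd (\<lambda>z. z $ b) x (\<lambda>l. if b = l then 1 else 0)"
proof -
  have d: "((\<lambda>z::real^'n. z $ b) has_derivative (\<lambda>h. h $ b)) (at x)"
    by (simp add: bounded_linear_vec_nth bounded_linear_imp_has_derivative)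
  have eq: "(\<lambda>h::real^'n. \<Sum>l\<in>UNIV. h $ l * (if b = l then 1 else 0)) = (\<lambda>h. h $ b)" by simp
  show ?thesis unfolding hpd_def eq by (rule d)
qed

context splb
begin

lemma jac_id: assumes c: "c \<in> A" and x: "x \<in> chart_img c" shows "jac c c x = mat 1"
proof -
  have "frechet_derivative (\<lambda>w. transition c c w $ i) (at x) (ax a) = (if i = a then 1 else 0)" for i a
  proof -
    have "hpd (\<lambda>w. transition c c w $ i) x (\<lambda>l. if i = l then 1 else 0)"
      by (rule hpd_cong[OF open_img[OF c] x _ hpd_coord]) (simp add: transition_def inv2)
    from hpd_pd[OF this, of a] show ?thesis by (simp add: pd_def)
  qed
  thus ?thesis by (simp add: jac_def mat_def vec_eq_iff)
qed

lemma tensoriality: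
  assumes c: "c \<in> A" and d: "d \<in> A" and q: "q \<in> fst c" "q \<in> fst d"
  shows "sf d mm u v (snd d q) = sf c mm u v (snd c q)"
proof -
  define W where "W = snd d ` (fst c \<inter> fst d)"
  define Wc where "Wc = snd c ` (fst c \<inter> fst d)"
  define y0 where "y0 = snd d q"
  define x where "x = snd c q"
  define tau where "tau i z = transition c d z $ i" for i z
  define t where "t b y = transition d c y $ b" for b y
  have W: "open W" unfolding W_def by (rule open_image[OF d]) (use open_dom[OF c] open_dom[OF d] in auto)
  have Wc: "open Wc" unfolding Wc_def by (rule open_image[OF c]) (use open_dom[OF c] open_dom[OF d] in auto)
  have y0W: "y0 \<in> W" using q by (simp add: W_def y0_def)
  have xWc: "x \<in> Wc" using q by (simp add: Wc_def x_def)
  have x_img: "x \<in> chart_img c" using q by (simp add: x_def img_mem)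
  have y0_img: "y0 \<in> chart_img d" using q by (simp add: y0_def img_mem)
  have Wc_img: "Wc \<subseteq> chart_img c" by (auto simp: Wc_def chart_img_def)
  have tau_sm: "smooth_fun Wc (tau i)" for i unfolding tau_def[abs_def] Wc_def using trans_smooth[OF c d] by blast
  have t_sm: "smooth_fun W (t b)" for b unfolding t_def[abs_def] W_def using trans_smooth[OF d c] by (simp add: Int_commute)
  have invW: "chart_inv d y \<in> fst c \<inter> fst d" "snd d (chart_inv d y) = y" if "y \<in> W" for y
    using that inv1[OF d] unfolding W_def by auto
  have invWc: "chart_inv c z \<in> fst c \<inter> fst d" "snd c (chart_inv c z) = z" if "z \<in> Wc" for z
    using that inv1[OF c] unfolding Wc_def by auto
  have tW: "transition d c y \<in> Wc" "chart_inv c (transition d c y) = chart_inv d y" if "y \<in> W" for y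
    using invW[OF that] inv1[OF c] by (auto simp: transition_def Wc_def)
  have ty0: "transition d c y0 = x" using q inv1[OF d] by (simp add: transition_def y0_def x_def)
  have taux: "transition c d x = y0" using q inv1[OF c] by (simp add: transition_def y0_def x_def)
  have t_tau: "transition d c (transition c d z) = z" if "z \<in> Wc" for z
    using invWc[OF that] inv1[OF d] by (simp add: transition_def)
  define J where "J i m z = pd (tau i) (ax m) z" for i m z
  define T where "T b a = pd (t b) (ax a) y0" for b a
  have J_jac: "jac c d z $ i $ m = J i m z" for i m z by (simp add: jac_def J_def pd_def tau_def[abs_def])
  have hpd_tau: "hpd (tau a) x (\<lambda>l. J a l x)" for a unfolding J_def using hpd_smooth[OF tau_sm Wc xWc] .
  have hpd_t: "hpd (t b) y0 (T b)" for b unfolding T_def using hpd_smooth[OF t_sm W y0W] by simp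
  have TJ: "(\<Sum>a\<in>UNIV. T b a * J a l x) = (if b = l then 1 else 0)" for b l
  proof -
    have "hpd (\<lambda>z. t b (transition c d z)) x (\<lambda>l. \<Sum>a\<in>UNIV. T b a * J a l x)"
      using hpd_chain[of "transition c d" x "\<lambda>a l. J a l x" "t b" "T b"] hpd_tau hpd_t taux
      by (simp add: tau_def[abs_def])
    moreover have "hpd (\<lambda>z. t b (transition c d z)) x (\<lambda>l. if b = l then 1 else 0)"
      by (rule hpd_cong[OF Wc xWc _ hpd_coord]) (simp add: t_def t_tau)
    ultimately have "(\<lambda>l. \<Sum>a\<in>UNIV. T b a * J a l x) = (\<lambda>l. if b = l then 1 else 0)" by (rule hpd_unique)
    from fun_cong[OF this, of l] show ?thesis by simp
  qed
  have dJ_sym: "pd (J i m) (ax b) x = pd (J i b) (ax m) x" for i m b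
    unfolding J_def[abs_def] using smooth_schwarz[OF tau_sm Wc xWc] by metis
  have Fd_eq: "Fd d i j y = (\<Sum>m\<in>UNIV. J i m (transition d c y) * Fd c m j (transition d c y))" if "y \<in> W" for y i j
  proof -
    have r: "p0 \<in> fst c0 \<inter> fst c0" "chart_inv d y \<in> fst c \<inter> fst d" using invW[OF that] p0 by auto
    have "eps c0 d p0 (chart_inv d y) = jac c d (snd c (chart_inv d y)) ** eps c0 c p0 (chart_inv d y) ** jac c0 c0 (snd c0 p0)"
      using consist[OF c0 c0 c d r(1) r(2)] by simp
    also have "jac c0 c0 (snd c0 p0) = mat 1" using jac_id[OF c0] x0_img by (simp add: x0_def)
    finally have "eps c0 d p0 (chart_inv d y) = jac c d (transition d c y) ** eps c0 c p0 (chart_inv c (transition d c y))"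
      using tW[OF that] by (simp add: transition_def)
    hence "eps c0 d p0 (chart_inv d y) $ i $ j = (jac c d (transition d c y) ** eps c0 c p0 (chart_inv c (transition d c y))) $ i $ j"
      by simp
    thus ?thesis by (simp add: Fd_val matrix_matrix_mult_def J_jac)
  qed
  have hJt: "hpd (\<lambda>y. J i m (transition d c y)) y0 (\<lambda>a. \<Sum>b\<in>UNIV. pd (J i m) (ax b) x * T b a)" for i m
  proof -
    have sJ: "smooth_fun Wc (J i m)" unfolding J_def[abs_def] using smooth_pd_ax[OF tau_sm] by simp
    show ?thesis
      using hpd_chain[of "transition d c" y0 T "J i m" "\<lambda>b. pd (J i m) (ax b) x"] hpd_t hpd_smooth[OF sJ Wc xWc] ty0
      by (simp add: t_def[abs_def])
  qed
  have hFt: "hpd (\<lambda>y. Fd c m j (transition d c y)) y0 (\<lambda>a. \<Sum>b\<in>UNIV. dF c b m j x * T b a)" for m j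
    using hpd_chain[of "transition d c" y0 T "Fd c m j" "\<lambda>b. dF c b m j x"] hpd_t hpd_F[OF c x_img] ty0
    by (simp add: t_def[abs_def])
  have hFd: "hpd (Fd d i j) y0 (\<lambda>a. \<Sum>m\<in>UNIV. (\<Sum>b\<in>UNIV. pd (J i m) (ax b) x * T b a) * Fd c m j x + J i m x * (\<Sum>b\<in>UNIV. dF c b m j x * T b a))" for i j
  proof -
    have "hpd (\<lambda>y. \<Sum>m\<in>UNIV. J i m (transition d c y) * Fd c m j (transition d c y)) y0
       (\<lambda>a. \<Sum>m\<in>UNIV. (\<Sum>b\<in>UNIV. pd (J i m) (ax b) x * T b a) * Fd c m j (transition d c y0) + J i m (transition d c y0) * (\<Sum>b\<in>UNIV. dF c b m j x * T b a))"
      by (intro hpd_sum hpd_mult hJt hFt)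
    hence "hpd (Fd d i j) y0
       (\<lambda>a. \<Sum>m\<in>UNIV. (\<Sum>b\<in>UNIV. pd (J i m) (ax b) x * T b a) * Fd c m j (transition d c y0) + J i m (transition d c y0) * (\<Sum>b\<in>UNIV. dF c b m j x * T b a))"
      by (rule hpd_cong[OF W y0W, rotated]) (simp add: Fd_eq)
    thus ?thesis by (simp add: ty0)
  qed
  have dFd: "dF d a i j y0 = (\<Sum>m\<in>UNIV. (\<Sum>b\<in>UNIV. pd (J i m) (ax b) x * T b a) * Fd c m j x + J i m x * (\<Sum>b\<in>UNIV. dF c b m j x * T b a))" for a i j
    using fun_cong[OF hpd_unique[OF hpd_F[OF d y0_img] hFd], of a] by simp
  have Fdx: "Fd d i j y0 = (\<Sum>m\<in>UNIV. J i m x * Fd c m j x)" for i j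
    using Fd_eq[OF y0W] ty0 by simp
  have GFd: "(\<Sum>m\<in>UNIV. Gd d i m y0 * (\<Sum>m'\<in>UNIV. J m m' x * Fd c m' j x)) = (if i = j then 1 else 0)" for i j
    using GF[OF d y0_img] by (simp add: Fdx)
  have "sf d mm u v y0 = Sfun (\<lambda>a i j. \<Sum>m\<in>UNIV. (\<Sum>b\<in>UNIV. pd (J i m) (ax b) x * T b a) * Fd c m j x + J i m x * (\<Sum>b\<in>UNIV. dF c b m j x * T b a))
              (\<lambda>i j. \<Sum>m\<in>UNIV. J i m x * Fd c m j x) (\<lambda>i j. Gd d i j y0) mm u v"
    unfolding sf_def dFd Fdx ..
  also have "\<dots> = sf c mm u v x"
    unfolding sf_def
    by (rule K3[where dJ="\<lambda>b i m. pd (J i m) (ax b) x"]) (use FG[OF c x_img] TJ dJ_sym GFd in auto)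
  finally show ?thesis by (simp add: y0_def x_def)
qed

end



context splb
begin

abbreviation "DS c y k m u v \<equiv> dS (\<lambda>r k i j. ddF c r k i j y) (\<lambda>k i j. dF c k i j y) (\<lambda>i j. Fd c i j y)
       (\<lambda>i j. Gd c i j y) (\<lambda>k i j. dG c k i j y) k m u v"

lemma K1_inst:
  assumes c: "c \<in> A" and y: "y \<in> chart_img c"
  shows "(\<Sum>r\<in>UNIV. \<Sum>j\<in>UNIV. curvR2 eps c i r j k y * Fd c j u y * Fd c r v y) = (\<Sum>m\<in>UNIV. Fd c i m y * DS c y k m u v)"
  unfolding curvR2_eq[OF c y]
  by (rule K1) (use FG[OF c y] GF[OF c y] dG_formula[OF c y] ddF_sym[OF c y] in auto)

lemma R2_iff_DS:
  assumes c: "c \<in> A" and y: "y \<in> chart_img c"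
  shows "(\<forall>i r j k. curvR2 eps c i r j k y = 0) \<longleftrightarrow> (\<forall>k m u v. DS c y k m u v = 0)"
proof
  assume R: "\<forall>i r j k. curvR2 eps c i r j k y = 0"
  show "\<forall>k m u v. DS c y k m u v = 0"
  proof (intro allI)
    fix k m u v
    have "(\<Sum>m\<in>UNIV. Fd c i m y * DS c y k m u v) = 0" for i
      using K1_inst[OF c y, of i k u v] R by simp
    thus "DS c y k m u v = 0"
      by (rule contract1_inv[where G="\<lambda>i j. Gd c i j y" and F="\<lambda>i j. Fd c i j y", rotated]) (use GF[OF c y] in auto)
  qed
next
  assume D: "\<forall>k m u v. DS c y k m u v = 0"
  show "\<forall>i r j k. curvR2 eps c i r j k y = 0"
  proof (intro allI)
    fix i r j k
    show "curvR2 eps c i r j k y = 0"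
    proof (rule contract2_inv[where F="\<lambda>i j. Fd c i j y" and G="\<lambda>i j. Gd c i j y" and T="\<lambda>r j. curvR2 eps c i r j k y"])
      show "(\<Sum>m\<in>UNIV. Fd c i m y * Gd c m j y) = (if i = j then 1 else 0)" for i j using FG[OF c y] .
      show "(\<Sum>r\<in>UNIV. \<Sum>j\<in>UNIV. curvR2 eps c i r j k y * Fd c j u y * Fd c r v y) = 0" for u v
        using K1_inst[OF c y, of i k u v] D by simp
    qed
  qed
qed

lemma curvR_contract:
  assumes c: "c \<in> A" and d: "d \<in> A" and x: "x \<in> chart_img c" and y: "y \<in> chart_img d"
  shows "(\<Sum>k\<in>UNIV. \<Sum>j\<in>UNIV. curvR eps c d i k j (x, y) * Fd c j u x * Fd c k v x)
       = (\<Sum>m\<in>UNIV. Fd d i m y * (sf d m u v y - sf c m u v x))"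
proof -
  have A: "A_coeff eps c d i k j (x, y) = Ae (\<lambda>i j. Fd d i j y) (\<lambda>k i j. dF d k i j y) (\<lambda>i j. Gd c i j x) (\<lambda>k i j. dG c k i j x) i k j" for i k j
    unfolding A_coeff_def Ae_def
    by (simp add: dx_eps[OF c d x y] dy_eps[OF c d x y] M1[OF d c y x] M1[OF c d x y] dF_def dG_def)
  show ?thesis
    unfolding curvR_def A sf_def
    by (rule K2) (use GF[OF c x] dG_formula[OF c x] FG[OF d y] in auto)
qed

lemma flat_imp_const:
  assumes fl: "flat A eps" and c: "c \<in> A" and x: "x \<in> chart_img c" and y: "y \<in> chart_img c"
  shows "sf c m u v y = sf c m u v x"
proof -
  have "(\<Sum>m\<in>UNIV. Fd c i m y * (sf c m u v y - sf c m u v x)) = 0" for i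
    using curvR_contract[OF c c x y, of i u v, symmetric] fl c x y unfolding flat_def by simp
  hence "sf c m u v y - sf c m u v x = 0"
    by (rule contract1_inv[where G="\<lambda>i j. Gd c i j y" and F="\<lambda>i j. Fd c i j y", rotated]) (use GF[OF c y] in auto)
  thus ?thesis by simp
qed

lemma flat_imp_R2: assumes fl: "flat A eps" shows "R2_zero A eps"
  unfolding R2_zero_def
proof (intro ballI allI)
  fix c y i r j k assume c: "c \<in> A" and y: "y \<in> chart_img c"
  have "DS c y k m u v = 0" for k m u v
  proof -
    have "hpd (sf c m u v) y (\<lambda>k. 0)"
      by (rule hpd_cong[OF open_img[OF c] y _ hpd_const[of "sf c m u v y"]]) (use flat_imp_const[OF fl c y] in auto)
    from fun_cong[OF hpd_unique[OF hpd_sf[OF c y] this], of k] show ?thesis by simp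
  qed
  thus "curvR2 eps c i r j k y = 0" using R2_iff_DS[OF c y] by blast
qed

lemma R2_imp_loc_const:
  assumes R2: "R2_zero A eps" and c: "c \<in> A" and y: "y \<in> chart_img c"
  shows "\<exists>e>0. ball y e \<subseteq> chart_img c \<and> (\<forall>z\<in>ball y e. \<forall>m u v. sf c m u v z = sf c m u v y)"
proof -
  obtain e where e: "e > 0" "ball y e \<subseteq> chart_img c" using open_img[OF c] y open_contains_ball by blast
  have "\<forall>z\<in>ball y e. sf c m u v z = sf c m u v y" for m u v
  proof -
    have "\<exists>C. \<forall>z\<in>ball y e. sf c m u v z = C"
    proof (rule has_derivative_zero_constant)
      show "convex (ball y e)" by simp
      fix z assume z: "z \<in> ball y e"
      hence zc: "z \<in> chart_img c" using e by auto
      have "\<forall>k m u v. DS c z k m u v = 0" using R2_iff_DS[OF c zc] R2 c zc unfolding R2_zero_def by blast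
      hence "hpd (sf c m u v) z (\<lambda>k. 0)" using hpd_sf[OF c zc, of m u v] by simp
      thus "(sf c m u v has_derivative (\<lambda>h. 0)) (at z within ball y e)"
        unfolding hpd_def by (simp add: has_derivative_at_withinI)
    qed
    then obtain C where "\<forall>z\<in>ball y e. sf c m u v z = C" by blast
    moreover have "y \<in> ball y e" using e by simp
    ultimately show ?thesis by metis
  qed
  thus ?thesis using e by blast
qed

definition "chartof q = (SOME c. c \<in> A \<and> q \<in> fst c)"
definition "sig q = (\<lambda>m u v. sf (chartof q) m u v (snd (chartof q) q))"

lemma chartof: "chartof q \<in> A \<and> q \<in> fst (chartof q)"
  unfolding chartof_def using cover[of q] by (metis (mono_tags, lifting) someI_ex)

lemma sig_eq: "c \<in> A \<Longrightarrow> q \<in> fst c \<Longrightarrow> sig q = (\<lambda>m u v. sf c m u v (snd c q))"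
  unfolding sig_def using tensoriality[of "chartof q" c q] chartof[of q] by auto

lemma sig_loc:
  assumes R2: "R2_zero A eps"
  shows "\<exists>N. open N \<and> q \<in> N \<and> (\<forall>q'\<in>N. sig q' = sig q)"
proof -
  obtain c where c: "c \<in> A" "q \<in> fst c" using cover by blast
  have y: "snd c q \<in> chart_img c" using img_mem[OF c(2)] .
  obtain e where e: "e > 0" "ball (snd c q) e \<subseteq> chart_img c"
      "\<forall>z\<in>ball (snd c q) e. \<forall>m u v. sf c m u v z = sf c m u v (snd c q)"
    using R2_imp_loc_const[OF R2 c(1) y] by blast
  define N where "N = fst c \<inter> snd c -` ball (snd c q) e"
  have "open N" unfolding N_def by (rule open_preimage[OF c(1)]) simp
  moreover have "q \<in> N" using c e by (simp add: N_def)
  moreover have "sig q' = sig q" if "q' \<in> N" for q'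
  proof -
    have "q' \<in> fst c" "snd c q' \<in> ball (snd c q) e" using that by (auto simp: N_def)
    thus ?thesis using sig_eq[OF c(1)] c e(3) by auto
  qed
  ultimately show ?thesis by blast
qed

lemma R2_imp_flat:
  assumes R2: "R2_zero A eps" and conn0: "connected (insert p0 UNIV)"
  shows "flat A eps"
proof -
  have const: "sig q = sig p0" for q
  proof -
    define U where "U = {q. sig q = sig p0}"
    define V where "V = {q. sig q \<noteq> sig p0}"
    have oU: "open U" unfolding open_subopen[of U]
    proof
      fix q assume "q \<in> U"
      obtain N where N: "open N" "q \<in> N" "\<forall>q'\<in>N. sig q' = sig q" using sig_loc[OF R2, of q] by blast
      have "N \<subseteq> U" using N(3) \<open>q \<in> U\<close> unfolding U_def by auto
      then show "\<exists>T. open T \<and> q \<in> T \<and> T \<subseteq> U" using N by blast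
    qed
    have oV: "open V" unfolding open_subopen[of V]
    proof
      fix q assume "q \<in> V"
      obtain N where N: "open N" "q \<in> N" "\<forall>q'\<in>N. sig q' = sig q" using sig_loc[OF R2, of q] by blast
      have "N \<subseteq> V" using N(3) \<open>q \<in> V\<close> unfolding V_def by auto
      then show "\<exists>T. open T \<and> q \<in> T \<and> T \<subseteq> V" using N by blast
    qed
    have "U \<inter> insert p0 UNIV = {} \<or> V \<inter> insert p0 UNIV = {}"
      by (rule connectedD[OF conn0 oU oV]) (auto simp: U_def V_def)
    moreover have "p0 \<in> U" by (simp add: U_def)
    ultimately have "V = {}" by auto
    thus ?thesis by (auto simp: V_def)
  qed
  show ?thesis unfolding flat_def
  proof (intro ballI allI)
    fix c d x y i k j assume c: "c \<in> A" and d: "d \<in> A" and x: "x \<in> chart_img c" and y: "y \<in> chart_img d"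
    have eq: "sf d m u v y = sf c m u v x" for m u v
    proof -
      have "sig (chart_inv c x) = (\<lambda>m u v. sf c m u v x)" using sig_eq[OF c inv3[OF x]] inv2[OF x] by simp
      moreover have "sig (chart_inv d y) = (\<lambda>m u v. sf d m u v y)" using sig_eq[OF d inv3[OF y]] inv2[OF y] by simp
      ultimately show ?thesis using const[of "chart_inv c x"] const[of "chart_inv d y"] by metis
    qed
    show "curvR eps c d i k j (x, y) = 0"
    proof (rule contract2_inv[where F="\<lambda>i j. Fd c i j x" and G="\<lambda>i j. Gd c i j x" and T="\<lambda>k j. curvR eps c d i k j (x, y)"])
      show "(\<Sum>m\<in>UNIV. Fd c i m x * Gd c m j x) = (if i = j then 1 else 0)" for i j using FG[OF c x] .
      show "(\<Sum>k\<in>UNIV. \<Sum>j\<in>UNIV. curvR eps c d i k j (x, y) * Fd c j u x * Fd c k v x) = 0" for u v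
        using curvR_contract[OF c d x y, of i u v] eq by simp
    qed
  qed
qed

end

theorem proposition16:
  fixes A :: "('m::{t2_space, second_countable_topology}, 'n::finite) chart set"
    and eps :: "('m, 'n) chart \<Rightarrow> ('m, 'n) chart \<Rightarrow> 'm \<Rightarrow> 'm \<Rightarrow> real^'n^'n"
  assumes "smooth_atlas A"
    and "CARD('n) \<ge> 2"
    and "connected (UNIV :: 'm set)"
    and "is_splitting A eps"
  shows "flat A eps \<longleftrightarrow> R2_zero A eps"
proof -
  interpret spl A eps using assms(1,4) by unfold_locales
  obtain c0 where c0: "c0 \<in> A" "undefined \<in> fst c0" using cover by blast
  interpret splb A eps c0 undefined using c0 by unfold_locales
  have cn: "connected (insert undefined (UNIV::'m set))" using assms(3) by simp
  show ?thesis using flat_imp_R2 R2_imp_flat[OF _ cn] by blast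
qed


end
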